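(* Let $R$ be an invariant Bezout domain which is a ring of simple range 2. Then $R$ is a D-K elementary divisor ring.
   Context: All rings are associative with nonzero identity. A Bezout domain is a domain in which every finitely generated right ideal and every finitely generated left ideal is principal. A nonzero element $a$ is invariant if $aR=Ra$; a domain is invariant if every nonzero element is invariant. For $x\in R$, $RxR$ denotes the two-sided ideal generated by $x$. A ring $R$ is called a ring of simple range 2 if for all $a,b,c\in R$ with $c\neq 0$ and $RaR+RbR+RcR=R$ there exist $p,q\in R$ such that $R(pa+qb)R+RpcR=R$. Two matrices $A,B$ over $R$ are equivalent if $B=PAQ$ for invertible $P,Q$. $R$ is a D-K elementary divisor ring if every (rectangular) matrix over $R$ is equivalent to a matrix $\mathrm{diag}(\varepsilon_1,\dots,\varepsilon_r,0,\dots,0)$ such that $R\varepsilon_{i+1}R\subseteq \varepsilon_iR\cap R\varepsilon_i$ for $i=1,\dots,r-1$ and $\varepsilon_1,\dots,\varepsilon_{r-1}$ are invariant elements. *)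

theory Defs
  imports Main "Jordan_Normal_Form.Matrix"
begin

text \<open>Rings are of class ring_1 (associative, with 1, not necessarily commutative).
  A domain is a ring_1_no_zero_divisors (in particular 0 is not 1).\<close>

definition right_principal :: "'a::ring_1 \<Rightarrow> 'a set" where
  "right_principal a = {a * r | r. True}"

definition left_principal :: "'a::ring_1 \<Rightarrow> 'a set" where
  "left_principal a = {r * a | r. True}"

definition two_sided_ideal :: "'a::ring_1 \<Rightarrow> 'a set" where
  "two_sided_ideal x = {y. \<exists>(n::nat) (r::nat \<Rightarrow> 'a) (s::nat \<Rightarrow> 'a). y = (\<Sum>i<n. r i * x * s i)}"

definition right_ideal_gen :: "'a::ring_1 set \<Rightarrow> 'a set" where
  "right_ideal_gen S = {(\<Sum>a\<in>S. a * f a) | f. True}"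

definition left_ideal_gen :: "'a::ring_1 set \<Rightarrow> 'a set" where
  "left_ideal_gen S = {(\<Sum>a\<in>S. f a * a) | f. True}"

definition bezout_ring :: "'a::ring_1 itself \<Rightarrow> bool" where
  "bezout_ring TYPE('a) \<longleftrightarrow>
     (\<forall>S::'a set. finite S \<longrightarrow> (\<exists>d. right_ideal_gen S = right_principal d)) \<and>
     (\<forall>S::'a set. finite S \<longrightarrow> (\<exists>d. left_ideal_gen S = left_principal d))"

definition invariant_elem :: "'a::ring_1 \<Rightarrow> bool" where
  "invariant_elem a \<longleftrightarrow> a \<noteq> 0 \<and> right_principal a = left_principal a"

definition invariant_ring :: "'a::ring_1 itself \<Rightarrow> bool" where
  "invariant_ring TYPE('a) \<longleftrightarrow> (\<forall>a::'a. a \<noteq> 0 \<longrightarrow> invariant_elem a)"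

definition simple_range_2 :: "'a::ring_1 itself \<Rightarrow> bool" where
  "simple_range_2 TYPE('a) \<longleftrightarrow>
    (\<forall>a b c::'a. c \<noteq> 0 \<longrightarrow>
       {u + v + w | u v w. u \<in> two_sided_ideal a \<and> v \<in> two_sided_ideal b \<and> w \<in> two_sided_ideal c} = UNIV \<longrightarrow>
       (\<exists>p q. {u + v | u v. u \<in> two_sided_ideal (p * a + q * b) \<and> v \<in> two_sided_ideal (p * c)} = UNIV))"

definition DK_elementary_divisor_ring :: "'a::ring_1 itself \<Rightarrow> bool" where
  "DK_elementary_divisor_ring TYPE('a) \<longleftrightarrow>
    (\<forall>m n (A::'a mat). A \<in> carrier_mat m n \<longrightarrow>
      (\<exists>P Q (eps::nat \<Rightarrow> 'a) r.
         P \<in> carrier_mat m m \<and> invertible_mat P \<and>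
         Q \<in> carrier_mat n n \<and> invertible_mat Q \<and>
         r \<le> min m n \<and>
         P * A * Q = mat m n (\<lambda>(i, j). if i = j \<and> i < r then eps i else 0) \<and>
         (\<forall>i<r. eps i \<noteq> 0) \<and>
         (\<forall>i. i + 1 < r \<longrightarrow>
            two_sided_ideal (eps (i + 1)) \<subseteq> right_principal (eps i) \<inter> left_principal (eps i)
            \<and> invariant_elem (eps i))))"

end

theory Submission
  imports Defs
begin

lemma index_mult_sum:
  assumes "i < dim_row A" "j < dim_col B" "dim_col A = dim_row B"
  shows "(A * B) $$ (i,j) = (\<Sum>t<dim_row B. A $$ (i,t) * B $$ (t,j))"
  using assms by (simp add: scalar_prod_def lessThan_atLeast0)

lemma sum_two_pts_r:
  fixes f :: "nat \<Rightarrow> 'a::semiring_0"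
  assumes "k < n" "l < n" "k \<noteq> l"
  shows "(\<Sum>t<n. f t * (if t = k then x else if t = l then y else 0)) = f k * x + f l * y"
proof -
  have "(\<Sum>t<n. f t * (if t = k then x else if t = l then y else 0)) =
        (\<Sum>t<n. (if t = k then f k * x else 0) + (if t = l then f l * y else 0))"
    by (rule sum.cong) (use assms in auto)
  also have "\<dots> = f k * x + f l * y" using assms by (simp add: sum.distrib)
  finally show ?thesis .
qed

lemma sum_two_pts_l:
  fixes f :: "nat \<Rightarrow> 'a::semiring_0"
  assumes "k < n" "l < n" "k \<noteq> l"
  shows "(\<Sum>t<n. (if t = k then x else if t = l then y else 0) * f t) = x * f k + y * f l"
proof -
  have "(\<Sum>t<n. (if t = k then x else if t = l then y else 0) * f t) =
        (\<Sum>t<n. (if t = k then x * f k else 0) + (if t = l then y * f l else 0))"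
    by (rule sum.cong) (use assms in auto)
  also have "\<dots> = x * f k + y * f l" using assms by (simp add: sum.distrib)
  finally show ?thesis .
qed

lemma sum_one_pt_r:
  fixes f :: "nat \<Rightarrow> 'a::semiring_1"
  assumes "j < n"
  shows "(\<Sum>t<n. f t * (if t = j then 1 else 0)) = f j"
proof -
  have "(\<Sum>t<n. f t * (if t = j then 1 else 0)) = (\<Sum>t<n. if t = j then f j else 0)"
    by (rule sum.cong) auto
  then show ?thesis using assms by simp
qed

lemma sum_one_pt_l:
  fixes f :: "nat \<Rightarrow> 'a::semiring_1"
  assumes "j < n"
  shows "(\<Sum>t<n. (if j = t then 1 else 0) * f t) = f j"
proof -
  have "(\<Sum>t<n. (if j = t then 1 else 0) * f t) = (\<Sum>t<n. if t = j then f j else 0)"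
    by (rule sum.cong) auto
  then show ?thesis using assms by simp
qed

type_synonym 'a m2 = "'a \<times> 'a \<times> 'a \<times> 'a"

fun m2mul :: "'a::ring_1 m2 \<Rightarrow> 'a m2 \<Rightarrow> 'a m2" where
  "m2mul (a,b,c,d) (e,f,g,h) = (a*e + b*g, a*f + b*h, c*e + d*g, c*f + d*h)"

definition inv2 :: "'a::ring_1 m2 \<Rightarrow> bool" where
  "inv2 M \<longleftrightarrow> (\<exists>N. m2mul M N = (1,0,0,1) \<and> m2mul N M = (1,0,0,1))"

lemma m2mul_assoc: "m2mul (m2mul A B) C = m2mul A (m2mul B C)"
  by (cases A; cases B; cases C) (simp add: algebra_simps)

lemma m2mul_one: "m2mul (1,0,0,1) A = A" "m2mul A (1,0,0,1) = A"
  by (cases A; simp)+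

lemma inv2_mul: assumes "inv2 A" "inv2 B" shows "inv2 (m2mul A B)"
proof -
  obtain A' where A: "m2mul A A' = (1,0,0,1)" "m2mul A' A = (1,0,0,1)" using assms(1) inv2_def by blast
  obtain B' where B: "m2mul B B' = (1,0,0,1)" "m2mul B' B = (1,0,0,1)" using assms(2) inv2_def by blast
  have "m2mul (m2mul A B) (m2mul B' A') = (1,0,0,1)"
    by (simp add: m2mul_assoc, simp add: m2mul_assoc[symmetric] B m2mul_one A)
  moreover have "m2mul (m2mul B' A') (m2mul A B) = (1,0,0,1)"
    by (simp add: m2mul_assoc, simp add: m2mul_assoc[symmetric] A m2mul_one B)
  ultimately show ?thesis unfolding inv2_def by blast
qed

lemma inv2_one: "inv2 (1,0,0,1)" unfolding inv2_def by (rule exI[of _ "(1,0,0,1)"]) simp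

fun emb :: "nat \<Rightarrow> nat \<Rightarrow> nat \<Rightarrow> 'a::ring_1 m2 \<Rightarrow> 'a mat" where
  "emb n k l (a,b,c,d) = mat n n (\<lambda>(i,j). if i = k \<and> j = k then a else if i = k \<and> j = l then b
      else if i = l \<and> j = k then c else if i = l \<and> j = l then d else if i = j then 1 else 0)"

lemma emb_idx: "i < n \<Longrightarrow> j < n \<Longrightarrow> emb n k l (a,b,c,d) $$ (i,j) =
  (if i = k \<and> j = k then a else if i = k \<and> j = l then b
      else if i = l \<and> j = k then c else if i = l \<and> j = l then d else if i = j then 1 else 0)"
  by (simp only: emb.simps index_mat case_prod_conv)

lemma emb_carrier[simp]: "emb n k l M \<in> carrier_mat n n"
  by (cases M) simp

lemma emb_dims[simp]: "dim_row (emb n k l M) = n" "dim_col (emb n k l M) = n"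
  by (cases M; simp)+

lemma emb_right:
  fixes A :: "'a::ring_1 mat"
  assumes A: "A \<in> carrier_mat m n" and kl: "k < n" "l < n" "k \<noteq> l" and ij: "i < m" "j < n"
  shows "(A * emb n k l (a,b,c,d)) $$ (i,j) =
     (if j = k then A$$(i,k) * a + A$$(i,l) * c else if j = l then A$$(i,k) * b + A$$(i,l) * d else A$$(i,j))"
proof -
  have e: "(A * emb n k l (a,b,c,d)) $$ (i,j) = (\<Sum>t<n. A $$ (i,t) * emb n k l (a,b,c,d) $$ (t,j))"
    using A ij by (subst index_mult_sum) auto
  show ?thesis
  proof (cases "j = k")
    case True
    have "(\<Sum>t<n. A $$ (i,t) * emb n k l (a,b,c,d) $$ (t,j)) =
          (\<Sum>t<n. A $$ (i,t) * (if t = k then a else if t = l then c else 0))"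
      by (rule sum.cong) (use True kl in auto)
    then show ?thesis using e True sum_two_pts_r[OF kl] by simp
  next
    case F: False
    show ?thesis
    proof (cases "j = l")
      case True
      have "(\<Sum>t<n. A $$ (i,t) * emb n k l (a,b,c,d) $$ (t,j)) =
            (\<Sum>t<n. A $$ (i,t) * (if t = k then b else if t = l then d else 0))"
        by (rule sum.cong) (use True F kl in auto)
      then show ?thesis using e True F sum_two_pts_r[OF kl] by simp
    next
      case False
      have "(\<Sum>t<n. A $$ (i,t) * emb n k l (a,b,c,d) $$ (t,j)) =
            (\<Sum>t<n. A $$ (i,t) * (if t = j then 1 else 0))"
        by (rule sum.cong) (use False F kl ij in auto)
      then show ?thesis using e False F sum_one_pt_r[OF ij(2)] by simp
    qed
  qed
qed

lemma emb_left:
  fixes A :: "'a::ring_1 mat"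
  assumes A: "A \<in> carrier_mat m n" and kl: "k < m" "l < m" "k \<noteq> l" and ij: "i < m" "j < n"
  shows "(emb m k l (a,b,c,d) * A) $$ (i,j) =
     (if i = k then a * A$$(k,j) + b * A$$(l,j) else if i = l then c * A$$(k,j) + d * A$$(l,j) else A$$(i,j))"
proof -
  have e: "(emb m k l (a,b,c,d) * A) $$ (i,j) = (\<Sum>t<m. emb m k l (a,b,c,d) $$ (i,t) * A $$ (t,j))"
    using A ij by (subst index_mult_sum) auto
  show ?thesis
  proof (cases "i = k")
    case True
    have "(\<Sum>t<m. emb m k l (a,b,c,d) $$ (i,t) * A $$ (t,j)) =
          (\<Sum>t<m. (if t = k then a else if t = l then b else 0) * A $$ (t,j))"
      by (rule sum.cong) (use True kl in auto)
    then show ?thesis using e True sum_two_pts_l[OF kl] by simp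
  next
    case F: False
    show ?thesis
    proof (cases "i = l")
      case True
      have "(\<Sum>t<m. emb m k l (a,b,c,d) $$ (i,t) * A $$ (t,j)) =
            (\<Sum>t<m. (if t = k then c else if t = l then d else 0) * A $$ (t,j))"
        by (rule sum.cong) (use True F kl in auto)
      then show ?thesis using e True F sum_two_pts_l[OF kl] by simp
    next
      case False
      have "(\<Sum>t<m. emb m k l (a,b,c,d) $$ (i,t) * A $$ (t,j)) =
            (\<Sum>t<m. (if i = t then 1 else 0) * A $$ (t,j))"
        by (rule sum.cong) (use False F kl ij in auto)
      then show ?thesis using e False F sum_one_pt_l[OF ij(1)] by simp
    qed
  qed
qed

lemma emb_mul:
  assumes kl: "k < n" "l < n" "k \<noteq> l"
  shows "emb n k l M * emb n k l N = (emb n k l (m2mul M N) :: 'a::ring_1 mat)"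
proof -
  obtain a b c d where M: "M = (a,b,c,d)" by (cases M) auto
  obtain e f g h where N: "N = (e,f,g,h)" by (cases N) auto
  show ?thesis
  proof (rule eq_matI)
    fix i j assume "i < dim_row (emb n k l (m2mul M N) :: 'a mat)" "j < dim_col (emb n k l (m2mul M N) :: 'a mat)"
    then have ij: "i < n" "j < n" by auto
    have L: "(emb n k l M * emb n k l N) $$ (i,j) = (if i = k then a * emb n k l N $$(k,j) + b * emb n k l N $$ (l,j)
       else if i = l then c * emb n k l N $$(k,j) + d * emb n k l N $$(l,j) else emb n k l N $$(i,j))"
      unfolding M by (rule emb_left[OF emb_carrier kl ij])
    show "(emb n k l M * emb n k l N) $$ (i,j) = emb n k l (m2mul M N) $$ (i,j)"
      unfolding L using kl ij by (simp only: M N m2mul.simps emb_idx) (cases "i = j"; cases "i = k"; cases "i = l"; cases "j = k"; cases "j = l"; simp)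
  qed simp_all
qed

lemma emb_one: "emb n k l (1,0,0,1) = (1\<^sub>m n :: 'a::ring_1 mat)"
proof (rule eq_matI)
  fix i j assume ij: "i < dim_row (1\<^sub>m n :: 'a mat)" "j < dim_col (1\<^sub>m n :: 'a mat)"
  then have "i < n" "j < n" by auto
  then show "emb n k l (1,0,0,1) $$ (i,j) = (1\<^sub>m n :: 'a mat) $$ (i,j)"
    by (simp only: emb.simps index_mat index_one_mat case_prod_conv) (cases "i = j"; cases "i = k"; cases "i = l"; simp)
qed simp_all


definition eqv :: "'a::ring_1 mat \<Rightarrow> 'a mat \<Rightarrow> bool" where
  "eqv A B \<longleftrightarrow> (\<exists>P P' Q Q'. P \<in> carrier_mat (dim_row A) (dim_row A) \<and> P' \<in> carrier_mat (dim_row A) (dim_row A)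
     \<and> P * P' = 1\<^sub>m (dim_row A) \<and> P' * P = 1\<^sub>m (dim_row A)
     \<and> Q \<in> carrier_mat (dim_col A) (dim_col A) \<and> Q' \<in> carrier_mat (dim_col A) (dim_col A)
     \<and> Q * Q' = 1\<^sub>m (dim_col A) \<and> Q' * Q = 1\<^sub>m (dim_col A) \<and> B = P * A * Q)"

lemma eqv_refl: "eqv A A"
  unfolding eqv_def by (rule exI[of _ "1\<^sub>m (dim_row A)"], rule exI[of _ "1\<^sub>m (dim_row A)"],
    rule exI[of _ "1\<^sub>m (dim_col A)"], rule exI[of _ "1\<^sub>m (dim_col A)"]) simp

lemma eqv_dims: "eqv A B \<Longrightarrow> dim_row B = dim_row A \<and> dim_col B = dim_col A"
  unfolding eqv_def by auto

lemma inv_prod: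
  fixes R :: "'a::ring_1 mat"
  assumes "R \<in> carrier_mat m m" "P \<in> carrier_mat m m" "P' \<in> carrier_mat m m" "R' \<in> carrier_mat m m"
    "P * P' = 1\<^sub>m m" "R * R' = 1\<^sub>m m"
  shows "(R * P) * (P' * R') = 1\<^sub>m m"
proof -
  have "(R * P) * (P' * R') = R * (P * (P' * R'))"
    by (rule assoc_mult_mat[of R m m P m "P' * R'" m]) (use assms in auto)
  also have "P * (P' * R') = (P * P') * R'"
    by (rule assoc_mult_mat[of P m m P' m R' m, symmetric]) (use assms in auto)
  also have "(P * P') * R' = R'" using assms(4,5) by (simp only: left_mult_one_mat carrier_matD)
  finally show ?thesis using assms(6) by simp
qed

lemma eqv_trans:
  fixes A :: "'a::ring_1 mat"
  assumes A: "A \<in> carrier_mat m n" and AB: "eqv A B" and BC: "eqv B C" shows "eqv A C"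
proof -
  have dA: "dim_row A = m" "dim_col A = n" using A by auto
  obtain P P' Q Q' where 1: "P \<in> carrier_mat m m" "P' \<in> carrier_mat m m" "P * P' = 1\<^sub>m m" "P' * P = 1\<^sub>m m"
     "Q \<in> carrier_mat n n" "Q' \<in> carrier_mat n n" "Q * Q' = 1\<^sub>m n" "Q' * Q = 1\<^sub>m n" "B = P * A * Q"
    using AB unfolding eqv_def dA by (elim exE conjE) (rule that; assumption)
  have B: "B \<in> carrier_mat m n" unfolding 1(9) using 1(1,5) A by (intro mult_carrier_mat)
  have dB: "dim_row B = m" "dim_col B = n" using B by auto
  obtain R R' S S' where 2: "R \<in> carrier_mat m m" "R' \<in> carrier_mat m m" "R * R' = 1\<^sub>m m" "R' * R = 1\<^sub>m m"
     "S \<in> carrier_mat n n" "S' \<in> carrier_mat n n" "S * S' = 1\<^sub>m n" "S' * S = 1\<^sub>m n" "C = R * B * S"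
    using BC unfolding eqv_def dB by (elim exE conjE) (rule that; assumption)
  have e1: "(R * P) * (P' * R') = 1\<^sub>m m" "(P' * R') * (R * P) = 1\<^sub>m m"
    using inv_prod[of R m P P' R'] inv_prod[of P' m R' R P] 1 2 by blast+
  have e2: "(Q * S) * (S' * Q') = 1\<^sub>m n" "(S' * Q') * (Q * S) = 1\<^sub>m n"
    using inv_prod[of Q n S S' Q'] inv_prod[of S' n Q' Q S] 1 2 by blast+
  have e3: "C = (R * P) * A * (Q * S)"
  proof -
    have PA: "P * A \<in> carrier_mat m n" "R * (P * A) \<in> carrier_mat m n" using 1 2 A by (blast intro: mult_carrier_mat)+
    have "C = R * ((P * A) * Q) * S" using 1(9) 2(9) by (simp only:)
    also have "R * ((P * A) * Q) = (R * (P * A)) * Q"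
      by (rule assoc_mult_mat[of R m m "P * A" n Q n, symmetric]) (use 1 2 PA in blast)+
    also have "(R * (P * A)) * Q * S = (R * (P * A)) * (Q * S)"
      by (rule assoc_mult_mat[of "R * (P * A)" m n Q n S n]) (use 1 2 PA in blast)+
    also have "R * (P * A) = (R * P) * A"
      by (rule assoc_mult_mat[of R m m P m A n, symmetric]) (use 1 2 A in blast)+
    finally show ?thesis .
  qed
  show ?thesis unfolding eqv_def dA
    using mult_carrier_mat[OF 2(1) 1(1)] mult_carrier_mat[OF 1(2) 2(2)]
      mult_carrier_mat[OF 1(5) 2(5)] mult_carrier_mat[OF 2(6) 1(6)] e1 e2 e3
    by (intro exI[of _ "R * P"] exI[of _ "P' * R'"] exI[of _ "Q * S"] exI[of _ "S' * Q'"]) (intro conjI; assumption)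
qed

definition colop :: "'a::ring_1 mat \<Rightarrow> nat \<Rightarrow> nat \<Rightarrow> 'a m2 \<Rightarrow> 'a mat" where
  "colop A k l M = A * emb (dim_col A) k l M"

definition rowop :: "'a::ring_1 mat \<Rightarrow> nat \<Rightarrow> nat \<Rightarrow> 'a m2 \<Rightarrow> 'a mat" where
  "rowop A k l M = emb (dim_row A) k l M * A"

lemma colop_carrier[simp]: "A \<in> carrier_mat m n \<Longrightarrow> colop A k l M \<in> carrier_mat m n"
  unfolding colop_def by auto
lemma rowop_carrier[simp]: "A \<in> carrier_mat m n \<Longrightarrow> rowop A k l M \<in> carrier_mat m n"
  unfolding rowop_def by auto

lemma colop_idx:
  assumes A: "A \<in> carrier_mat m n" and kl: "k < n" "l < n" "k \<noteq> l" and ij: "i < m" "j < n"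
  shows "colop A k l (a,b,c,d) $$ (i,j) =
     (if j = k then A$$(i,k) * a + A$$(i,l) * c else if j = l then A$$(i,k) * b + A$$(i,l) * d else A$$(i,j))"
  using emb_right[OF A kl ij] A unfolding colop_def by simp

lemma rowop_idx:
  assumes A: "A \<in> carrier_mat m n" and kl: "k < m" "l < m" "k \<noteq> l" and ij: "i < m" "j < n"
  shows "rowop A k l (a,b,c,d) $$ (i,j) =
     (if i = k then a * A$$(k,j) + b * A$$(l,j) else if i = l then c * A$$(k,j) + d * A$$(l,j) else A$$(i,j))"
  using emb_left[OF A kl ij] A unfolding rowop_def by simp

lemma colop_eqv:
  assumes A: "A \<in> carrier_mat m n" and kl: "k < n" "l < n" "k \<noteq> l" and M: "inv2 M"
  shows "eqv A (colop A k l M)"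
proof -
  obtain N where N: "m2mul M N = (1,0,0,1)" "m2mul N M = (1,0,0,1)" using M inv2_def by blast
  have "emb n k l M * emb n k l N = 1\<^sub>m n" "emb n k l N * emb n k l M = 1\<^sub>m n"
    using emb_mul[OF kl] N emb_one by metis+
  moreover have "colop A k l M = 1\<^sub>m m * A * emb n k l M" using A unfolding colop_def by simp
  moreover have dA: "dim_row A = m" "dim_col A = n" using A by auto
  ultimately show ?thesis unfolding eqv_def dA
    by (intro exI[of _ "1\<^sub>m m"] exI[of _ "emb n k l M"] exI[of _ "emb n k l N"] conjI) (simp_all del: assoc_mult_mat)
qed

lemma rowop_eqv:
  assumes A: "A \<in> carrier_mat m n" and kl: "k < m" "l < m" "k \<noteq> l" and M: "inv2 M"
  shows "eqv A (rowop A k l M)"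
proof -
  obtain N where N: "m2mul M N = (1,0,0,1)" "m2mul N M = (1,0,0,1)" using M inv2_def by blast
  have "emb m k l M * emb m k l N = 1\<^sub>m m" "emb m k l N * emb m k l M = 1\<^sub>m m"
    using emb_mul[OF kl] N emb_one by metis+
  moreover have "rowop A k l M = emb m k l M * A * 1\<^sub>m n" using A unfolding rowop_def by simp
  moreover have dA: "dim_row A = m" "dim_col A = n" using A by auto
  ultimately show ?thesis unfolding eqv_def dA
    by (intro exI[of _ "emb m k l M"] exI[of _ "emb m k l N"] exI[of _ "1\<^sub>m n"] exI[of _ "1\<^sub>m n"] conjI) (simp_all del: assoc_mult_mat)
qed

declare assoc_mult_mat[simp del]

abbreviation rp :: "'a::ring_1 \<Rightarrow> 'a set" where "rp \<equiv> right_principal"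

definition rideal :: "'a::ring_1 set \<Rightarrow> bool" where
  "rideal X \<longleftrightarrow> 0 \<in> X \<and> (\<forall>x\<in>X. \<forall>y\<in>X. x + y \<in> X) \<and> (\<forall>x\<in>X. \<forall>r. x * r \<in> X)"

definition ridl :: "'a::ring_1 set \<Rightarrow> 'a set" where "ridl S = \<Inter>{X. rideal X \<and> S \<subseteq> X}"

lemma rideal_ridl: "rideal (ridl S)"
  unfolding rideal_def ridl_def by blast

lemma ridl_mem: "x \<in> S \<Longrightarrow> x \<in> ridl S"
  unfolding ridl_def by blast

lemma ridl_least: "rideal X \<Longrightarrow> S \<subseteq> X \<Longrightarrow> ridl S \<subseteq> X"
  unfolding ridl_def by blast

lemma ridl_mono: "S \<subseteq> T \<Longrightarrow> ridl S \<subseteq> ridl T"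
  unfolding ridl_def by blast

lemma ridl_ridl: "S \<subseteq> ridl T \<Longrightarrow> ridl S \<subseteq> ridl T"
  using ridl_least rideal_ridl by blast

lemma rideal_0: "rideal X \<Longrightarrow> 0 \<in> X" unfolding rideal_def by blast
lemma rideal_add: "rideal X \<Longrightarrow> x \<in> X \<Longrightarrow> y \<in> X \<Longrightarrow> x + y \<in> X" unfolding rideal_def by blast
lemma rideal_mult: "rideal X \<Longrightarrow> x \<in> X \<Longrightarrow> x * r \<in> X" unfolding rideal_def by blast
lemma rideal_uminus: "rideal X \<Longrightarrow> x \<in> X \<Longrightarrow> - x \<in> X"
  using rideal_mult[of X x "-1"] by simp
lemma rideal_diff: "rideal X \<Longrightarrow> x \<in> X \<Longrightarrow> y \<in> X \<Longrightarrow> x - y \<in> X"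
  using rideal_add[of X x "-y"] rideal_uminus[of X y] by simp

lemma rideal_sum: "rideal X \<Longrightarrow> (\<And>i. i \<in> I \<Longrightarrow> f i \<in> X) \<Longrightarrow> sum f I \<in> X"
proof (induction I rule: infinite_finite_induct)
  case (infinite A) then show ?case by (simp add: rideal_0)
next
  case empty then show ?case by (simp add: rideal_0)
next
  case (insert x F) then show ?case by (simp add: rideal_add)
qed

lemma rp_iff: "x \<in> rp a \<longleftrightarrow> (\<exists>r. x = a * r)"
  unfolding right_principal_def by blast

lemma rideal_rp: "rideal (rp a)"
  unfolding rideal_def
proof (intro conjI ballI allI)
  show "0 \<in> rp a" unfolding rp_iff by (rule exI[of _ 0]) simp
next
  fix x y assume "x \<in> rp a" "y \<in> rp a"
  then obtain r s where "x = a * r" "y = a * s" unfolding rp_iff by blast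
  then have "x + y = a * (r + s)" by (simp add: distrib_left)
  then show "x + y \<in> rp a" unfolding rp_iff by blast
next
  fix x t assume "x \<in> rp a"
  then obtain r where "x = a * r" unfolding rp_iff by blast
  then show "x * t \<in> rp a" unfolding rp_iff by (simp add: mult.assoc, blast)
qed

lemma rp_self: "a \<in> rp a" unfolding rp_iff by (rule exI[of _ 1]) simp

lemma rp_0: "0 \<in> rp a" using rideal_0[OF rideal_rp] .

lemma rp_trans: "x \<in> rp b \<Longrightarrow> b \<in> rp a \<Longrightarrow> x \<in> rp a"
  unfolding rp_iff by (auto simp: mult.assoc)

lemma ridl_rp: "S \<subseteq> rp a \<Longrightarrow> x \<in> ridl S \<Longrightarrow> x \<in> rp a"
  using ridl_least[OF rideal_rp] by blast

lemma rp_mult: "x \<in> rp a \<Longrightarrow> x * r \<in> rp a"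
  using rideal_mult[OF rideal_rp] .

lemma rp_zero: "x \<in> rp 0 \<Longrightarrow> x = 0" unfolding rp_iff by simp

lemma ridl_two: "ridl {a, b} \<subseteq> {a * x + b * y | x y. True}"
proof (rule ridl_least)
  show "rideal {a * x + b * y | x y. True}"
    unfolding rideal_def
  proof (intro conjI ballI allI)
    show "0 \<in> {a * x + b * y | x y. True}" by (rule CollectI, rule exI[of _ 0], rule exI[of _ 0]) simp
  next
    fix u v assume "u \<in> {a * x + b * y | x y. True}" "v \<in> {a * x + b * y | x y. True}"
    then obtain x y x' y' where "u = a * x + b * y" "v = a * x' + b * y'" by blast
    then have "u + v = a * (x + x') + b * (y + y')" by (simp add: algebra_simps)
    then show "u + v \<in> {a * x + b * y | x y. True}" by blast
  next
    fix u r assume "u \<in> {a * x + b * y | x y. True}"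
    then obtain x y where "u = a * x + b * y" by blast
    then have "u * r = a * (x * r) + b * (y * r)" by (simp add: algebra_simps)
    then show "u * r \<in> {a * x + b * y | x y. True}" by blast
  qed
  have "a = a * 1 + b * 0" "b = a * 0 + b * 1" by simp_all
  then show "{a, b} \<subseteq> {a * x + b * y | x y. True}" by blast
qed

lemma ridl_three: "ridl {a, b, c} \<subseteq> {a * x + b * y + c * z | x y z. True}"
proof (rule ridl_least)
  show "rideal {a * x + b * y + c * z | x y z. True}"
    unfolding rideal_def
  proof (intro conjI ballI allI)
    have "(0::'a) = a * 0 + b * 0 + c * 0" by simp
    then show "0 \<in> {a * x + b * y + c * z | x y z. True}" by blast
  next
    fix u v assume "u \<in> {a * x + b * y + c * z | x y z. True}" "v \<in> {a * x + b * y + c * z | x y z. True}"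
    then obtain x y z x' y' z' where "u = a * x + b * y + c * z" "v = a * x' + b * y' + c * z'" by blast
    then have "u + v = a * (x + x') + b * (y + y') + c * (z + z')" by (simp add: algebra_simps)
    then show "u + v \<in> {a * x + b * y + c * z | x y z. True}" by blast
  next
    fix u r assume "u \<in> {a * x + b * y + c * z | x y z. True}"
    then obtain x y z where "u = a * x + b * y + c * z" by blast
    then have "u * r = a * (x * r) + b * (y * r) + c * (z * r)" by (simp add: algebra_simps)
    then show "u * r \<in> {a * x + b * y + c * z | x y z. True}" by blast
  qed
  have "a = a * 1 + b * 0 + c * 0" "b = a * 0 + b * 1 + c * 0" "c = a * 0 + b * 0 + c * 1" by simp_all
  then show "{a, b, c} \<subseteq> {a * x + b * y + c * z | x y z. True}" by blast
qed

lemma right_ideal_gen_sub: "finite S \<Longrightarrow> rideal X \<Longrightarrow> S \<subseteq> X \<Longrightarrow> right_ideal_gen S \<subseteq> X"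
  unfolding right_ideal_gen_def by (auto intro!: rideal_sum rideal_mult)

lemma right_ideal_gen_mem: "finite S \<Longrightarrow> s \<in> S \<Longrightarrow> s \<in> right_ideal_gen S"
proof -
  assume f: "finite S" and s: "s \<in> S"
  have "(\<Sum>a\<in>S. a * (if a = s then 1 else 0)) = (\<Sum>a\<in>S. if a = s then s else 0)"
    by (rule sum.cong) auto
  also have "\<dots> = s" using f s by simp
  finally have eq: "s = (\<Sum>a\<in>S. a * (if a = s then 1 else 0))" by simp
  show ?thesis unfolding right_ideal_gen_def
    by (intro CollectI exI[of _ "\<lambda>a. if a = s then 1 else 0"] conjI) (rule eq, rule TrueI)
qed

lemma bez:
  assumes B: "bezout_ring TYPE('a::ring_1)" and f: "finite (S::'a set)"
  shows "\<exists>d. d \<in> ridl S \<and> S \<subseteq> rp d"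
proof -
  obtain d where d: "right_ideal_gen S = rp d" using B f unfolding bezout_ring_def by blast
  have "d \<in> ridl S" using right_ideal_gen_sub[OF f rideal_ridl, of S] d rp_self ridl_mem by blast
  moreover have "S \<subseteq> rp d" using right_ideal_gen_mem[OF f] d by blast
  ultimately show ?thesis by blast
qed

lemma duoR:
  assumes I: "invariant_ring TYPE('a::ring_1)" shows "\<exists>r'. r * (a::'a) = a * r'"
proof (cases "a = 0")
  case True then show ?thesis by simp
next
  case False
  then have "rp a = left_principal a" using I unfolding invariant_ring_def invariant_elem_def by blast
  moreover have "r * a \<in> left_principal a" unfolding left_principal_def by blast
  ultimately have "r * a \<in> rp a" by simp
  then show ?thesis unfolding rp_iff by blast
qed

lemma duoL:
  assumes I: "invariant_ring TYPE('a::ring_1)" shows "\<exists>r'. (a::'a) * r = r' * a"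
proof (cases "a = 0")
  case True then show ?thesis by simp
next
  case False
  then have "rp a = left_principal a" using I unfolding invariant_ring_def invariant_elem_def by blast
  moreover have "a * r \<in> rp a" unfolding rp_iff by blast
  ultimately show ?thesis unfolding left_principal_def by blast
qed

lemma rideal_lmult:
  assumes I: "invariant_ring TYPE('a::ring_1)" and X: "rideal (X::'a set)" and x: "x \<in> X"
  shows "r * x \<in> X"
proof -
  obtain r' where "r * x = x * r'" using duoR[OF I] by blast
  then show ?thesis using rideal_mult[OF X x] by simp
qed

lemma two_sided_sub:
  assumes I: "invariant_ring TYPE('a::ring_1)" shows "two_sided_ideal (x::'a) \<subseteq> rp x"
proof
  fix y assume "y \<in> two_sided_ideal x"
  then obtain n r s where y: "y = (\<Sum>i<(n::nat). r i * x * s i)" unfolding two_sided_ideal_def by blast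
  have "r i * x * s i \<in> rp x" for i
    using rideal_mult[OF rideal_rp rideal_lmult[OF I rideal_rp rp_self]] .
  then show "y \<in> rp x" unfolding y by (intro rideal_sum rideal_rp)
qed

lemma two_sided_mem: "x * t \<in> two_sided_ideal x"
proof -
  have "x * t = (\<Sum>i<(1::nat). (\<lambda>_. 1) i * x * (\<lambda>_. t) i)" by simp
  then show ?thesis unfolding two_sided_ideal_def
    by (intro CollectI exI[of _ 1] exI[of _ "\<lambda>_. 1"] exI[of _ "\<lambda>_. t"])
qed

lemma swap_inv2: "inv2 (0,1,1,0)"
  unfolding inv2_def by (rule exI[of _ "(0,1,1,0)"]) simp

lemma L_row:
  fixes x y :: "'a::ring_1_no_zero_divisors"
  assumes I: "invariant_ring TYPE('a)" and B: "bezout_ring TYPE('a)"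
  shows "\<exists>a b c d e. inv2 (a,b,c,d) \<and> x*a + y*c = e \<and> x*b + y*d = 0 \<and> e \<in> ridl {x,y} \<and> x \<in> rp e \<and> y \<in> rp e"
proof (cases "x = 0")
  case True
  have yy: "y \<in> ridl {x,y}" by (rule ridl_mem) simp
  show ?thesis
    apply (rule exI[of _ 0], rule exI[of _ 1], rule exI[of _ 1], rule exI[of _ 0], rule exI[of _ y])
    using True yy by (simp add: swap_inv2 rp_0 rp_self)
next
  case x0: False
  obtain d where d: "d \<in> ridl {x,y}" "{x,y} \<subseteq> rp d" using bez[OF B, of "{x,y}"] by auto
  obtain xx yy where dxy: "d = x * xx + y * yy" using d(1) ridl_two by blast
  have "x \<in> rp d" "y \<in> rp d" using d(2) by auto
  then obtain a' b' where ab: "x = d * a'" "y = d * b'" unfolding rp_iff by blast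
  have d0: "d \<noteq> 0" using ab x0 by auto
  have a0: "a' \<noteq> 0" using ab x0 by auto
  have u: "a' * xx + b' * yy = 1"
  proof -
    have "d * (a' * xx + b' * yy) = d * 1" using dxy ab by (simp add: algebra_simps)
    then show ?thesis using d0 by simp
  qed
  obtain c where c: "b' * a' = a' * c" using duoR[OF I] by blast
  obtain t where t: "yy * a' = a' * t" using duoR[OF I] by blast
  define s1 where "s1 = - t"
  have s1: "a' * s1 = - (yy * a')" unfolding s1_def t by simp
  define z where "z = 1 - yy * b'"
  obtain w where w: "yy * z = z * w" using duoR[OF I] by blast
  have bz: "b' * z = a' * xx * b'"
  proof -
    have h: "b' * yy = 1 - a' * xx" using u by (simp add: algebra_simps)
    have "b' * z = b' - (b' * yy) * b'" unfolding z_def by (simp add: algebra_simps)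
    also have "\<dots> = b' - (1 - a' * xx) * b'" unfolding h ..
    also have "\<dots> = a' * xx * b'" by (simp add: algebra_simps)
    finally show ?thesis .
  qed
  define s2 where "s2 = xx * z + xx * b' * w"
  have s2: "a' * s2 = z"
  proof -
    have "z = (a' * xx + b' * yy) * z" using u by simp
    also have "\<dots> = a' * xx * z + b' * (yy * z)" by (simp add: algebra_simps)
    also have "\<dots> = a' * xx * z + (b' * z) * w" unfolding w by (simp add: mult.assoc)
    also have "\<dots> = a' * s2" unfolding bz s2_def by (simp add: algebra_simps)
    finally show ?thesis by simp
  qed
  have M1: "xx * a' + (-c) * s1 = 1"
  proof -
    have "a' * (xx * a' + (-c) * s1) = a' * xx * a' - (a' * c) * s1" by (simp add: algebra_simps)
    also have "\<dots> = a' * xx * a' - b' * (a' * s1)" unfolding c[symmetric] by (simp add: mult.assoc)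
    also have "\<dots> = (a' * xx + b' * yy) * a'" unfolding s1 by (simp add: algebra_simps)
    also have "\<dots> = a' * 1" using u by simp
    finally show ?thesis using a0 by (metis mult_left_cancel)
  qed
  have M2: "xx * b' + (-c) * s2 = 0"
  proof -
    have "a' * (xx * b' + (-c) * s2) = a' * xx * b' - (a' * c) * s2" by (simp add: algebra_simps)
    also have "\<dots> = a' * xx * b' - b' * (a' * s2)" unfolding c[symmetric] by (simp add: mult.assoc)
    also have "\<dots> = 0" unfolding s2 bz by simp
    finally show ?thesis using a0 by (metis mult_left_cancel mult_zero_right)
  qed
  have M3: "yy * a' + a' * s1 = 0" using s1 by simp
  have M4: "yy * b' + a' * s2 = 1" using s2 unfolding z_def by simp
  have N1: "a' * xx + b' * yy = 1" by (rule u)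
  have N2: "a' * (-c) + b' * a' = 0" using c by simp
  have N3: "s1 * xx + s2 * yy = 0"
  proof -
    have "a' * (s1 * xx + s2 * yy) = (a' * s1) * xx + (a' * s2) * yy" by (simp add: algebra_simps)
    also have "\<dots> = - (yy * (a' * xx)) + yy - yy * (b' * yy)" unfolding s1 s2 z_def by (simp add: algebra_simps)
    also have "\<dots> = yy * (1 - (a' * xx + b' * yy))" by (simp add: algebra_simps)
    also have "\<dots> = 0" using u by simp
    finally show ?thesis using a0 by (metis mult_left_cancel mult_zero_right)
  qed
  have N4: "s1 * (-c) + s2 * a' = 1"
  proof -
    have "a' * (s1 * (-c) + s2 * a') = - ((a' * s1) * c) + (a' * s2) * a'" by (simp add: algebra_simps)
    also have "\<dots> = yy * (a' * c) + a' - yy * (b' * a')" unfolding s1 s2 z_def by (simp add: algebra_simps)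
    also have "\<dots> = a' * 1" unfolding c by simp
    finally show ?thesis using a0 by (metis mult_left_cancel)
  qed
  have inv: "inv2 (xx, -c, yy, a')"
    unfolding inv2_def using M1 M2 M3 M4 N1 N2 N3 N4 by (intro exI[of _ "(a', b', s1, s2)"]) simp
  have e1: "x * xx + y * yy = d" using dxy by simp
  have e2: "x * (-c) + y * a' = 0"
  proof -
    have "x * (-c) + y * a' = d * (a' * (-c) + b' * a')" unfolding ab by (simp add: algebra_simps)
    then show ?thesis using N2 by simp
  qed
  show ?thesis by (rule exI[of _ xx], rule exI[of _ "-c"], rule exI[of _ yy], rule exI[of _ a'], rule exI[of _ d]) (use inv e1 e2 d in auto)
qed

lemma L_col:
  fixes x y :: "'a::ring_1_no_zero_divisors"
  assumes I: "invariant_ring TYPE('a)" and B: "bezout_ring TYPE('a)"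
  shows "\<exists>a b c d e. inv2 (a,b,c,d) \<and> a*x + b*y = e \<and> c*x + d*y = 0 \<and> e \<in> ridl {x,y} \<and> x \<in> rp e \<and> y \<in> rp e"
proof (cases "x = 0")
  case True
  have yy: "y \<in> ridl {x,y}" by (rule ridl_mem) simp
  show ?thesis
    apply (rule exI[of _ 0], rule exI[of _ 1], rule exI[of _ 1], rule exI[of _ 0], rule exI[of _ y])
    using True yy by (simp add: swap_inv2 rp_0 rp_self)
next
  case x0: False
  obtain d where d: "d \<in> ridl {x,y}" "{x,y} \<subseteq> rp d" using bez[OF B, of "{x,y}"] by auto
  obtain xx0 yy0 where dxy0: "d = x * xx0 + y * yy0" using d(1) ridl_two by blast
  obtain xx where xx: "x * xx0 = xx * x" using duoL[OF I] by blast
  obtain yy where yy: "y * yy0 = yy * y" using duoL[OF I] by blast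
  have dxy: "d = xx * x + yy * y" using dxy0 xx yy by simp
  have "x \<in> rp d" "y \<in> rp d" using d(2) by auto
  then obtain a0' b0' where ab0: "x = d * a0'" "y = d * b0'" unfolding rp_iff by blast
  obtain a' where a': "d * a0' = a' * d" using duoL[OF I] by blast
  obtain b' where b': "d * b0' = b' * d" using duoL[OF I] by blast
  have ab: "x = a' * d" "y = b' * d" using ab0 a' b' by simp_all
  have d0: "d \<noteq> 0" using ab x0 by auto
  have a0: "a' \<noteq> 0" using ab x0 by auto
  have u: "xx * a' + yy * b' = 1"
  proof -
    have "(xx * a' + yy * b') * d = 1 * d" using dxy ab by (simp add: algebra_simps)
    then show ?thesis using d0 by (metis mult_right_cancel)
  qed
  obtain c where c: "a' * b' = c * a'" using duoL[OF I] by blast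
  obtain t where t: "a' * yy = t * a'" using duoL[OF I] by blast
  define s1 where "s1 = - t"
  have s1: "s1 * a' = - (a' * yy)" unfolding s1_def t by simp
  define z where "z = 1 - b' * yy"
  obtain w where w: "z * yy = w * z" using duoL[OF I] by blast
  have bz: "z * b' = b' * xx * a'"
  proof -
    have h: "yy * b' = 1 - xx * a'" using u by (simp add: algebra_simps)
    have "z * b' = b' - b' * (yy * b')" unfolding z_def by (simp add: algebra_simps)
    also have "\<dots> = b' - b' * (1 - xx * a')" unfolding h ..
    also have "\<dots> = b' * xx * a'" by (simp add: algebra_simps)
    finally show ?thesis .
  qed
  define s2 where "s2 = z * xx + w * b' * xx"
  have s2: "s2 * a' = z"
  proof -
    have "z = z * (xx * a' + yy * b')" using u by simp
    also have "\<dots> = z * xx * a' + (z * yy) * b'" by (simp add: algebra_simps)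
    also have "\<dots> = z * xx * a' + w * (z * b')" unfolding w by (simp add: mult.assoc)
    also have "\<dots> = s2 * a'" unfolding bz s2_def by (simp add: algebra_simps)
    finally show ?thesis by simp
  qed
  have M1: "xx * a' + yy * b' = 1" by (rule u)
  have M2: "xx * s1 + yy * s2 = 0"
  proof -
    have "(xx * s1 + yy * s2) * a' = xx * (s1 * a') + yy * (s2 * a')" by (simp add: algebra_simps)
    also have "\<dots> = - ((xx * a') * yy) + yy - (yy * b') * yy" unfolding s1 s2 z_def by (simp add: algebra_simps)
    also have "\<dots> = (1 - (xx * a' + yy * b')) * yy" by (simp add: algebra_simps)
    also have "\<dots> = 0 * a'" using u by simp
    finally show ?thesis using a0 by (metis mult_right_cancel)
  qed
  have M3: "(-c) * a' + a' * b' = 0" using c by simp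
  have M4: "(-c) * s1 + a' * s2 = 1"
  proof -
    have "((-c) * s1 + a' * s2) * a' = - (c * (s1 * a')) + a' * (s2 * a')" by (simp add: algebra_simps)
    also have "\<dots> = (c * a') * yy + a' - (a' * b') * yy" unfolding s1 s2 z_def by (simp add: algebra_simps)
    also have "\<dots> = 1 * a'" unfolding c by simp
    finally show ?thesis using a0 by (metis mult_right_cancel)
  qed
  have N1: "a' * xx + s1 * (-c) = 1"
  proof -
    have "(a' * xx + s1 * (-c)) * a' = a' * xx * a' - s1 * (c * a')" by (simp add: algebra_simps)
    also have "\<dots> = a' * xx * a' - (s1 * a') * b'" unfolding c[symmetric] by (simp add: mult.assoc)
    also have "\<dots> = a' * (xx * a' + yy * b')" unfolding s1 by (simp add: algebra_simps)
    also have "\<dots> = 1 * a'" using u by simp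
    finally show ?thesis using a0 by (metis mult_right_cancel)
  qed
  have N2: "a' * yy + s1 * a' = 0" using s1 by simp
  have N3: "b' * xx + s2 * (-c) = 0"
  proof -
    have "(b' * xx + s2 * (-c)) * a' = b' * xx * a' - s2 * (c * a')" by (simp add: algebra_simps)
    also have "\<dots> = b' * xx * a' - (s2 * a') * b'" unfolding c[symmetric] by (simp add: mult.assoc)
    also have "\<dots> = 0 * a'" unfolding s2 bz by simp
    finally show ?thesis using a0 by (metis mult_right_cancel)
  qed
  have N4: "b' * yy + s2 * a' = 1" using s2 unfolding z_def by simp
  have inv: "inv2 (xx, yy, -c, a')"
    unfolding inv2_def using M1 M2 M3 M4 N1 N2 N3 N4 by (intro exI[of _ "(a', s1, b', s2)"]) simp
  have e1: "xx * x + yy * y = d" using dxy by simp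
  have e2: "(-c) * x + a' * y = 0"
  proof -
    have "(-c) * x + a' * y = ((-c) * a' + a' * b') * d" unfolding ab by (simp add: algebra_simps)
    then show ?thesis using M3 by simp
  qed
  show ?thesis by (rule exI[of _ xx], rule exI[of _ yy], rule exI[of _ "-c"], rule exI[of _ a'], rule exI[of _ d]) (use inv e1 e2 d in auto)
qed

lemma ridl_combL:
  assumes I: "invariant_ring TYPE('a::ring_1)" and "(x::'a) \<in> ridl S" "y \<in> ridl S"
  shows "p * x + q * y \<in> ridl S"
  using assms by (intro rideal_add rideal_lmult[OF I] rideal_ridl)

lemma ridl_combR:
  assumes "(x::'a::ring_1) \<in> ridl S" "y \<in> ridl S"
  shows "x * p + y * q \<in> ridl S"
  using assms by (intro rideal_add rideal_mult rideal_ridl)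

lemma rp_combL:
  assumes I: "invariant_ring TYPE('a::ring_1)" and "(x::'a) \<in> rp u" "y \<in> rp u"
  shows "p * x + q * y \<in> rp u"
  using assms by (intro rideal_add rideal_lmult[OF I] rideal_rp)

lemma rp_combR:
  assumes "(x::'a::ring_1) \<in> rp u" "y \<in> rp u"
  shows "x * p + y * q \<in> rp u"
  using assms by (intro rideal_add rideal_mult rideal_rp)

lemma unit_of_rinv:
  fixes d w :: "'a::ring_1_no_zero_divisors"
  assumes "d * w = 1" shows "w * d = 1"
proof -
  have d0: "d \<noteq> 0" using assms by auto
  have "d * (w * d) = d * 1" using assms by (simp add: mult.assoc[symmetric])
  then show ?thesis using d0 by (metis mult_left_cancel)
qed

lemma Key2':
  fixes a b c :: "'a::ring_1_no_zero_divisors"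
  assumes I: "invariant_ring TYPE('a)" and B: "bezout_ring TYPE('a)" and S: "simple_range_2 TYPE('a)"
  shows "\<exists>P Q u. inv2 P \<and> inv2 Q \<and> fst (m2mul (m2mul P (a,c,b,0)) Q) = u \<and> u \<in> ridl {a,b,c} \<and> {a,b,c} \<subseteq> rp u"
proof (cases "c = 0")
  case True
  obtain q00 q01 q10 q11 d where q: "inv2 (q00,q01,q10,q11)" "q00*a + q01*b = d" "q10*a + q11*b = 0"
    "d \<in> ridl {a,b}" "a \<in> rp d" "b \<in> rp d" using L_col[OF I B, of a b] by blast
  have "fst (m2mul (m2mul (q00,q01,q10,q11) (a,c,b,0)) (1,0,0,1)) = d" using True q(2) by simp
  moreover have "d \<in> ridl {a,b,c}" using q(4) ridl_mono[of "{a,b}" "{a,b,c}"] by blast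
  moreover have "{a,b,c} \<subseteq> rp d" using q(5,6) True rp_0 by auto
  ultimately show ?thesis using q(1) inv2_one by blast
next
  case c0: False
  obtain g where g: "g \<in> ridl {a,b,c}" "{a,b,c} \<subseteq> rp g" using bez[OF B, of "{a,b,c}"] by auto
  have "a \<in> rp g" "b \<in> rp g" "c \<in> rp g" using g(2) by auto
  then obtain a1 b1 c1 where abc: "a = g * a1" "b = g * b1" "c = g * c1" unfolding rp_iff by blast
  obtain \<alpha> \<beta> \<gamma> where gabc: "g = a * \<alpha> + b * \<beta> + c * \<gamma>" using g(1) ridl_three by blast
  have g0: "g \<noteq> 0" using abc c0 by auto
  have c10: "c1 \<noteq> 0" using abc c0 by auto
  have one: "a1 * \<alpha> + b1 * \<beta> + c1 * \<gamma> = 1"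
  proof -
    have "g * (a1 * \<alpha> + b1 * \<beta> + c1 * \<gamma>) = g * 1" using gabc abc by (simp add: algebra_simps)
    then show ?thesis using g0 by (metis mult_left_cancel)
  qed
  have U: "{u + v + w | u v w. u \<in> two_sided_ideal a1 \<and> v \<in> two_sided_ideal b1 \<and> w \<in> two_sided_ideal c1} = UNIV"
  proof -
    have "z \<in> {u + v + w | u v w. u \<in> two_sided_ideal a1 \<and> v \<in> two_sided_ideal b1 \<and> w \<in> two_sided_ideal c1}" for z
    proof -
      have "z = a1 * (\<alpha> * z) + b1 * (\<beta> * z) + c1 * (\<gamma> * z)"
        using one by (metis (no_types, lifting) distrib_right mult.assoc mult_1_left)
      then show ?thesis using two_sided_mem by blast
    qed
    then show ?thesis by blast
  qed
  obtain p1 q1 where pq1: "{u + v | u v. u \<in> two_sided_ideal (p1 * a1 + q1 * b1) \<and> v \<in> two_sided_ideal (p1 * c1)} = UNIV"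
    using S c10 U unfolding simple_range_2_def by blast
  define s1 where "s1 = p1 * a1 + q1 * b1"
  define t1 where "t1 = p1 * c1"
  obtain u v where uv: "1 = u + v" "u \<in> two_sided_ideal s1" "v \<in> two_sided_ideal t1"
    using pq1 unfolding s1_def t1_def by blast
  have "u \<in> rp s1" "v \<in> rp t1" using uv two_sided_sub[OF I, of s1] two_sided_sub[OF I, of t1] by blast+
  then obtain \<rho> \<tau> where "u = s1 * \<rho>" "v = t1 * \<tau>" unfolding rp_iff by blast
  then have rt: "s1 * \<rho> + t1 * \<tau> = 1" using uv(1) by simp
  obtain p where p: "g * p1 = p * g" using duoL[OF I] by blast
  obtain q where q: "g * q1 = q * g" using duoL[OF I] by blast
  have pab: "p * a + q * b = g * s1"
  proof -
    have "p * a + q * b = (p * g) * a1 + (q * g) * b1" unfolding abc by (simp add: mult.assoc)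
    also have "\<dots> = (g * p1) * a1 + (g * q1) * b1" unfolding p q ..
    also have "\<dots> = g * s1" unfolding s1_def by (simp add: algebra_simps)
    finally show ?thesis .
  qed
  have pc: "p * c = g * t1"
  proof -
    have "p * c = (p * g) * c1" unfolding abc by (simp add: mult.assoc)
    also have "\<dots> = g * t1" unfolding p[symmetric] t1_def by (simp add: mult.assoc)
    finally show ?thesis .
  qed
  define e1 where "e1 = a1 * \<rho> + c1 * \<tau>"
  define e2 where "e2 = b1 * \<rho>"
  have pe: "p1 * e1 + q1 * e2 = 1" using rt unfolding e1_def e2_def s1_def t1_def by (simp add: algebra_simps)
  obtain e1' where e1': "g * e1 = e1' * g" using duoL[OF I] by blast
  obtain e2' where e2': "g * e2 = e2' * g" using duoL[OF I] by blast
  have unimod: "p * e1' + q * e2' = 1"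
  proof -
    have "(p * e1' + q * e2') * g = p * (g * e1) + q * (g * e2)" unfolding e1' e2' by (simp add: algebra_simps)
    also have "\<dots> = (p * g) * e1 + (q * g) * e2" by (simp add: mult.assoc)
    also have "\<dots> = g * (p1 * e1 + q1 * e2)" unfolding p[symmetric] q[symmetric] by (simp add: algebra_simps)
    also have "\<dots> = 1 * g" using pe by simp
    finally show ?thesis using g0 by (metis mult_right_cancel)
  qed
  obtain b00 b01 b10 b11 dd where bb: "inv2 (b00,b01,b10,b11)" "p*b00 + q*b10 = dd" "p*b01 + q*b11 = 0"
    "dd \<in> ridl {p,q}" "p \<in> rp dd" "q \<in> rp dd" using L_row[OF I B, of p q] by blast
  have "1 \<in> rp dd" using unimod rp_combR[OF bb(5,6)] by metis
  then obtain w where w: "dd * w = 1" unfolding rp_iff by metis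
  have w': "w * dd = 1" using unit_of_rinv[OF w] .
  obtain i00 i01 i10 i11 where bi: "m2mul (b00,b01,b10,b11) (i00,i01,i10,i11) = (1,0,0,1)"
     "m2mul (i00,i01,i10,i11) (b00,b01,b10,b11) = (1,0,0,1)"
    using bb(1) unfolding inv2_def by (metis prod_cases4)
  have bi1: "b00 * i00 + b01 * i10 = 1" "b10 * i00 + b11 * i10 = 0" "b00 * i01 + b01 * i11 = 0" "b10 * i01 + b11 * i11 = 1"
    using bi(1) by simp_all
  have pi: "p = dd * i00"
  proof -
    have "p = p * (b00 * i00 + b01 * i10) + q * (b10 * i00 + b11 * i10)" using bi1 by simp
    also have "\<dots> = (p*b00 + q*b10) * i00 + (p*b01 + q*b11) * i10" by (simp add: algebra_simps)
    finally show ?thesis using bb(2,3) by simp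
  qed
  have qi: "q = dd * i01"
  proof -
    have "q = p * (b00 * i01 + b01 * i11) + q * (b10 * i01 + b11 * i11)" using bi1 by simp
    also have "\<dots> = (p*b00 + q*b10) * i01 + (p*b01 + q*b11) * i11" by (simp add: algebra_simps)
    finally show ?thesis using bb(2,3) by simp
  qed
  have i00: "i00 = w * p" using pi w' by (simp add: mult.assoc[symmetric])
  have i01: "i01 = w * q" using qi w' by (simp add: mult.assoc[symmetric])
  have inv_i: "inv2 (i00,i01,i10,i11)" unfolding inv2_def using bi by blast
  define f0 where "f0 = i00 * a + i01 * b"
  define f1 where "f1 = i00 * c + i01 * 0"
  have f0: "f0 = w * (g * s1)" unfolding f0_def i00 i01 pab[symmetric] by (simp add: algebra_simps)
  have f1: "f1 = w * (g * t1)" unfolding f1_def i00 pc[symmetric] by (simp add: algebra_simps)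
  obtain q00 q01 q10 q11 uu where qq: "inv2 (q00,q01,q10,q11)" "f0*q00 + f1*q10 = uu" "f0*q01 + f1*q11 = 0"
    "uu \<in> ridl {f0,f1}" "f0 \<in> rp uu" "f1 \<in> rp uu" using L_row[OF I B, of f0 f1] by blast
  have corner: "fst (m2mul (m2mul (i00,i01,i10,i11) (a,c,b,0)) (q00,q01,q10,q11)) = uu"
    using qq(2) unfolding f0_def f1_def by simp
  have "a \<in> ridl {a,b,c}" "b \<in> ridl {a,b,c}" "c \<in> ridl {a,b,c}" by (auto intro: ridl_mem)
  then have "f0 \<in> ridl {a,b,c}" "f1 \<in> ridl {a,b,c}" unfolding f0_def f1_def
    using ridl_combL[OF I] rideal_0[OF rideal_ridl] by blast+
  then have uu1: "uu \<in> ridl {a,b,c}" using qq(4) ridl_ridl[of "{f0,f1}" "{a,b,c}"] by blast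
  have "g \<in> rp uu"
  proof -
    have "g = g * (s1 * \<rho> + t1 * \<tau>)" using rt by simp
    also have "\<dots> = ((dd * w) * (g * s1)) * \<rho> + ((dd * w) * (g * t1)) * \<tau>" unfolding w by (simp add: algebra_simps)
    also have "\<dots> = (dd * f0) * \<rho> + (dd * f1) * \<tau>" unfolding f0 f1 by (simp only: mult.assoc)
    finally have "g = (dd * f0) * \<rho> + (dd * f1) * \<tau>" .
    moreover have "dd * f0 \<in> rp uu" "dd * f1 \<in> rp uu" using qq(5,6) rideal_lmult[OF I rideal_rp] by blast+
    ultimately show ?thesis using rp_combR by metis
  qed
  then have "{a,b,c} \<subseteq> rp uu" using g(2) rp_trans by blast
  then show ?thesis using inv_i qq(1) corner uu1 by blast
qed

lemma Key2:
  fixes x00 x01 x10 x11 :: "'a::ring_1_no_zero_divisors"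
  assumes I: "invariant_ring TYPE('a)" and B: "bezout_ring TYPE('a)" and S: "simple_range_2 TYPE('a)"
  shows "\<exists>P Q u. inv2 P \<and> inv2 Q \<and> fst (m2mul (m2mul P (x00,x01,x10,x11)) Q) = u
      \<and> u \<in> ridl {x00,x01,x10,x11} \<and> {x00,x01,x10,x11} \<subseteq> rp u"
proof -
  let ?S = "{x00,x01,x10,x11}"
  obtain p00 p01 p10 p11 c where pc: "inv2 (p00,p01,p10,p11)" "p00*x01 + p01*x11 = c" "p10*x01 + p11*x11 = 0"
    "c \<in> ridl {x01,x11}" using L_col[OF I B, of x01 x11] by blast
  define a where "a = p00 * x00 + p01 * x10"
  define b where "b = p10 * x00 + p11 * x10"
  have PX: "m2mul (p00,p01,p10,p11) (x00,x01,x10,x11) = (a,c,b,0)" using pc(2,3) unfolding a_def b_def by simp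
  obtain P2 Q u where k: "inv2 P2" "inv2 Q" "fst (m2mul (m2mul P2 (a,c,b,0)) Q) = u" "u \<in> ridl {a,b,c}" "{a,b,c} \<subseteq> rp u"
    using Key2'[OF I B S, of a c b] by blast
  have corner: "fst (m2mul (m2mul (m2mul P2 (p00,p01,p10,p11)) (x00,x01,x10,x11)) Q) = u"
    using k(3) PX by (simp only: m2mul_assoc)
  have xS: "x00 \<in> ridl ?S" "x01 \<in> ridl ?S" "x10 \<in> ridl ?S" "x11 \<in> ridl ?S" by (auto intro: ridl_mem)
  have "a \<in> ridl ?S" "b \<in> ridl ?S" unfolding a_def b_def using ridl_combL[OF I] xS by blast+
  moreover have "c \<in> ridl ?S" using pc(4) ridl_mono[of "{x01,x11}" ?S] by blast
  ultimately have u1: "u \<in> ridl ?S" using k(4) ridl_ridl[of "{a,b,c}" ?S] by blast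
  obtain n00 n01 n10 n11 where n: "m2mul (n00,n01,n10,n11) (p00,p01,p10,p11) = (1,0,0,1)"
    using pc(1) unfolding inv2_def by (metis prod_cases4)
  have X: "(x00,x01,x10,x11) = m2mul (n00,n01,n10,n11) (a,c,b,0)"
    unfolding PX[symmetric] m2mul_assoc[symmetric] n m2mul_one ..
  have e: "x00 = n00 * a + n01 * b" "x01 = n00 * c + n01 * 0" "x10 = n10 * a + n11 * b" "x11 = n10 * c + n11 * 0"
    using X by simp_all
  have abc: "a \<in> rp u" "b \<in> rp u" "c \<in> rp u" "0 \<in> rp u" using k(5) rp_0 by auto
  have "?S \<subseteq> rp u" using e rp_combL[OF I] abc by (metis empty_subsetI insert_subset)
  then show ?thesis using inv2_mul[OF k(1) pc(1)] k(2) corner u1 by blast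
qed

definition shape :: "nat \<Rightarrow> 'a::ring_1 mat \<Rightarrow> bool" where
  "shape s A \<longleftrightarrow> (\<forall>i j. i < dim_row A \<longrightarrow> j < dim_col A \<longrightarrow> (i < s \<or> j < s) \<longrightarrow> i \<noteq> j \<longrightarrow> A $$ (i,j) = 0)"

definition blk :: "nat \<Rightarrow> 'a::ring_1 mat \<Rightarrow> 'a set" where
  "blk s A = {A $$ (i,j) | i j. s \<le> i \<and> i < dim_row A \<and> s \<le> j \<and> j < dim_col A}"

definition beqv :: "nat \<Rightarrow> 'a::ring_1 mat \<Rightarrow> 'a mat \<Rightarrow> bool" where
  "beqv s A B \<longleftrightarrow> eqv A B \<and> dim_row B = dim_row A \<and> dim_col B = dim_col A \<and>
     (\<forall>i j. i < dim_row A \<longrightarrow> j < dim_col A \<longrightarrow> (i < s \<or> j < s) \<longrightarrow> B $$ (i,j) = A $$ (i,j)) \<and>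
     blk s B \<subseteq> ridl (blk s A)"

lemma beqv_refl: "beqv s A A"
  unfolding beqv_def using eqv_refl ridl_mem by blast

lemma beqv_trans:
  assumes A: "A \<in> carrier_mat m n" and AB: "beqv s A B" and BC: "beqv s B C" shows "beqv s A C"
proof -
  have "eqv A C" using eqv_trans[OF A] AB BC unfolding beqv_def by blast
  moreover have "blk s C \<subseteq> ridl (blk s A)" using AB BC ridl_ridl unfolding beqv_def by blast
  ultimately show ?thesis using AB BC unfolding beqv_def by auto
qed

lemma shape_of_beqv: "beqv s A B \<Longrightarrow> shape s A \<Longrightarrow> shape s B"
  unfolding beqv_def shape_def by auto

lemma blk_mem: "s \<le> i \<Longrightarrow> i < dim_row A \<Longrightarrow> s \<le> j \<Longrightarrow> j < dim_col A \<Longrightarrow> A $$ (i,j) \<in> blk s A"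
  unfolding blk_def by blast

lemma colop_beqv:
  fixes A :: "'a::ring_1 mat"
  assumes A: "A \<in> carrier_mat m n" and sh: "shape s A" and kl: "s \<le> k" "s \<le> l" "k < n" "l < n" "k \<noteq> l"
    and M: "inv2 M"
  shows "beqv s A (colop A k l M)"
proof -
  obtain a b c d where Md: "M = (a,b,c,d)" by (cases M) auto
  let ?B = "colop A k l M"
  have idx: "\<And>i j. i < m \<Longrightarrow> j < n \<Longrightarrow> ?B $$ (i,j) =
     (if j = k then A$$(i,k) * a + A$$(i,l) * c else if j = l then A$$(i,k) * b + A$$(i,l) * d else A$$(i,j))"
    unfolding Md using colop_idx[OF A kl(3-5)] by blast
  have dims: "dim_row A = m" "dim_col A = n" "dim_row ?B = m" "dim_col ?B = n" using carrier_matD[OF A] carrier_matD[OF colop_carrier[OF A, of k l M]] by auto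
  have out: "?B $$ (i,j) = A $$ (i,j)" if "i < m" "j < n" "i < s \<or> j < s" for i j
  proof (cases "j = k \<or> j = l")
    case True
    then have "i < s" using that kl by auto
    then have z: "A $$ (i,k) = 0" "A $$ (i,l) = 0" "A $$ (i,j) = 0" using sh that kl True unfolding shape_def dims by auto
    show ?thesis using idx[OF that(1,2)] z by simp
  next
    case False then show ?thesis using idx[OF that(1,2)] by simp
  qed
  have "blk s ?B \<subseteq> ridl (blk s A)"
  proof
    fix x assume "x \<in> blk s ?B"
    then obtain i j where ij: "x = ?B $$ (i,j)" "s \<le> i" "i < m" "s \<le> j" "j < n" unfolding blk_def dims by blast
    have mem: "A $$ (i,k) \<in> ridl (blk s A)" "A $$ (i,l) \<in> ridl (blk s A)" "A $$ (i,j) \<in> ridl (blk s A)"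
      using ij kl by (auto intro!: ridl_mem blk_mem simp: dims)
    show "x \<in> ridl (blk s A)" unfolding ij(1) idx[OF ij(3,5)] using mem ridl_combR by auto
  qed
  moreover have "eqv A ?B" using colop_eqv[OF A kl(3-5) M] .
  ultimately show ?thesis unfolding beqv_def dims using out by blast
qed

lemma rowop_beqv:
  fixes A :: "'a::ring_1 mat"
  assumes I: "invariant_ring TYPE('a)"
    and A: "A \<in> carrier_mat m n" and sh: "shape s A" and kl: "s \<le> k" "s \<le> l" "k < m" "l < m" "k \<noteq> l"
    and M: "inv2 M"
  shows "beqv s A (rowop A k l M)"
proof -
  obtain a b c d where Md: "M = (a,b,c,d)" by (cases M) auto
  let ?B = "rowop A k l M"
  have idx: "\<And>i j. i < m \<Longrightarrow> j < n \<Longrightarrow> ?B $$ (i,j) =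
     (if i = k then a * A$$(k,j) + b * A$$(l,j) else if i = l then c * A$$(k,j) + d * A$$(l,j) else A$$(i,j))"
    unfolding Md using rowop_idx[OF A kl(3-5)] by blast
  have dims: "dim_row A = m" "dim_col A = n" "dim_row ?B = m" "dim_col ?B = n" using carrier_matD[OF A] carrier_matD[OF rowop_carrier[OF A, of k l M]] by auto
  have out: "?B $$ (i,j) = A $$ (i,j)" if "i < m" "j < n" "i < s \<or> j < s" for i j
  proof (cases "i = k \<or> i = l")
    case True
    then have "j < s" using that kl by auto
    then have z: "A $$ (k,j) = 0" "A $$ (l,j) = 0" "A $$ (i,j) = 0" using sh that kl True unfolding shape_def dims by auto
    show ?thesis using idx[OF that(1,2)] z by simp
  next
    case False then show ?thesis using idx[OF that(1,2)] by simp
  qed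
  have "blk s ?B \<subseteq> ridl (blk s A)"
  proof
    fix x assume "x \<in> blk s ?B"
    then obtain i j where ij: "x = ?B $$ (i,j)" "s \<le> i" "i < m" "s \<le> j" "j < n" unfolding blk_def dims by blast
    have mem: "A $$ (k,j) \<in> ridl (blk s A)" "A $$ (l,j) \<in> ridl (blk s A)" "A $$ (i,j) \<in> ridl (blk s A)"
      using ij kl by (auto intro!: ridl_mem blk_mem simp: dims)
    show "x \<in> ridl (blk s A)" unfolding ij(1) idx[OF ij(3,5)] using mem ridl_combL[OF I] by auto
  qed
  moreover have "eqv A ?B" using rowop_eqv[OF A kl(3-5) M] .
  ultimately show ?thesis unfolding beqv_def dims using out by blast
qed

definition rowset :: "'a::ring_1 mat \<Rightarrow> nat \<Rightarrow> nat set \<Rightarrow> 'a set" where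
  "rowset A r J = (\<lambda>j. A $$ (r,j)) ` J"

lemma colreduce_aux:
  fixes A :: "'a::ring_1_no_zero_divisors mat"
  assumes I: "invariant_ring TYPE('a)" and Bz: "bezout_ring TYPE('a)"
    and A: "A \<in> carrier_mat m n" and sh: "shape s A" and i: "i < m" and ss: "s \<le> s'" "s' < n"
  shows "Suc s' + k \<le> n \<Longrightarrow> \<exists>B. B \<in> carrier_mat m n \<and> beqv s A B \<and>
    (\<forall>r j. r < m \<longrightarrow> j < n \<longrightarrow> (j < s' \<or> Suc s' + k \<le> j) \<longrightarrow> B $$ (r,j) = A $$ (r,j)) \<and>
    (\<forall>r j. r < m \<longrightarrow> s' \<le> j \<longrightarrow> j < Suc s' + k \<longrightarrow> B $$ (r,j) \<in> ridl (rowset A r {s'..<Suc s' + k})) \<and>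
    (\<forall>j. s' < j \<longrightarrow> j < Suc s' + k \<longrightarrow> B $$ (i,j) = 0) \<and>
    (\<forall>j. s' \<le> j \<longrightarrow> j < Suc s' + k \<longrightarrow> A $$ (i,j) \<in> rp (B $$ (i,s')))"
proof (induction k)
  case 0
  have h1: "\<forall>r j. r < m \<longrightarrow> s' \<le> j \<longrightarrow> j < Suc s' + 0 \<longrightarrow> A $$ (r,j) \<in> ridl (rowset A r {s'..<Suc s' + 0})"
  proof (intro allI impI)
    fix r j assume "r < m" "s' \<le> j" "j < Suc s' + 0"
    then have "j = s'" by simp
    then show "A $$ (r,j) \<in> ridl (rowset A r {s'..<Suc s' + 0})"
      unfolding rowset_def by (intro ridl_mem) simp
  qed
  have h2: "\<forall>j. s' \<le> j \<longrightarrow> j < Suc s' + 0 \<longrightarrow> A $$ (i,j) \<in> rp (A $$ (i,s'))"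
    using rp_self by (metis add_0_right le_antisym less_Suc_eq_le)
  have h3: "\<forall>j. s' < j \<longrightarrow> j < Suc s' + 0 \<longrightarrow> A $$ (i,j) = 0" by simp
  show ?case using A beqv_refl h1 h2 h3 by blast
next
  case (Suc k)
  let ?t = "Suc s' + k"
  obtain B where B: "B \<in> carrier_mat m n" "beqv s A B"
    "\<forall>r j. r < m \<longrightarrow> j < n \<longrightarrow> (j < s' \<or> ?t \<le> j) \<longrightarrow> B $$ (r,j) = A $$ (r,j)"
    "\<forall>r j. r < m \<longrightarrow> s' \<le> j \<longrightarrow> j < ?t \<longrightarrow> B $$ (r,j) \<in> ridl (rowset A r {s'..<?t})"
    "\<forall>j. s' < j \<longrightarrow> j < ?t \<longrightarrow> B $$ (i,j) = 0"
    "\<forall>j. s' \<le> j \<longrightarrow> j < ?t \<longrightarrow> A $$ (i,j) \<in> rp (B $$ (i,s'))"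
    using Suc by auto
  have tn: "?t < n" using Suc.prems by simp
  obtain a b c d e where L: "inv2 (a,b,c,d)" "B$$(i,s')*a + B$$(i,?t)*c = e" "B$$(i,s')*b + B$$(i,?t)*d = 0"
    "B$$(i,s') \<in> rp e" "B$$(i,?t) \<in> rp e"
    using L_row[OF I Bz, of "B$$(i,s')" "B$$(i,?t)"] by blast
  let ?C = "colop B s' ?t (a,b,c,d)"
  have kl: "s' < n" "?t < n" "s' \<noteq> ?t" using tn by auto
  have idx: "\<And>r j. r < m \<Longrightarrow> j < n \<Longrightarrow> ?C $$ (r,j) =
     (if j = s' then B$$(r,s') * a + B$$(r,?t) * c else if j = ?t then B$$(r,s') * b + B$$(r,?t) * d else B$$(r,j))"
    using colop_idx[OF B(1) kl] by blast
  have shB: "shape s B" using shape_of_beqv[OF B(2) sh] .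
  have C1: "?C \<in> carrier_mat m n" using colop_carrier[OF B(1)] .
  have C2: "beqv s A ?C" using beqv_trans[OF A B(2) colop_beqv[OF B(1) shB ss(1) _ kl L(1)]] ss by simp
  have C3: "\<forall>r j. r < m \<longrightarrow> j < n \<longrightarrow> (j < s' \<or> Suc s' + Suc k \<le> j) \<longrightarrow> ?C $$ (r,j) = A $$ (r,j)"
    using idx B(3) by auto
  have C4: "\<forall>r j. r < m \<longrightarrow> s' \<le> j \<longrightarrow> j < Suc s' + Suc k \<longrightarrow> ?C $$ (r,j) \<in> ridl (rowset A r {s'..<Suc s' + Suc k})"
  proof (intro allI impI)
    fix r j assume rj: "r < m" "s' \<le> j" "j < Suc s' + Suc k"
    let ?R = "ridl (rowset A r {s'..<Suc s' + Suc k})"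
    have sub: "ridl (rowset A r {s'..<?t}) \<subseteq> ?R" unfolding rowset_def by (rule ridl_mono) auto
    have bs: "B $$ (r,s') \<in> ?R" using B(4) rj sub by auto
    have bt: "B $$ (r,?t) \<in> ?R" using B(3) rj tn by (auto intro!: ridl_mem simp: rowset_def)
    show "?C $$ (r,j) \<in> ?R"
    proof (cases "j = s' \<or> j = ?t")
      case True then show ?thesis using idx[OF rj(1)] tn bs bt ridl_combR by (auto)
    next
      case False
      then have "j < ?t" using rj by auto
      then show ?thesis using idx[OF rj(1)] tn False B(4) rj sub by auto
    qed
  qed
  have C5: "\<forall>j. s' < j \<longrightarrow> j < Suc s' + Suc k \<longrightarrow> ?C $$ (i,j) = 0"
    using idx[OF i] B(5) L(3) tn by (auto simp: less_Suc_eq)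
  have Ce: "?C $$ (i,s') = e" using idx[OF i] L(2) ss by simp
  have C6: "\<forall>j. s' \<le> j \<longrightarrow> j < Suc s' + Suc k \<longrightarrow> A $$ (i,j) \<in> rp (?C $$ (i,s'))"
  proof (intro allI impI)
    fix j assume j: "s' \<le> j" "j < Suc s' + Suc k"
    show "A $$ (i,j) \<in> rp (?C $$ (i,s'))"
    proof (cases "j = ?t")
      case True
      then have "A $$ (i,j) = B $$ (i,?t)" using B(3) i tn by auto
      then show ?thesis using Ce L(5) by simp
    next
      case False
      then have "A $$ (i,j) \<in> rp (B $$ (i,s'))" using B(6) j by auto
      then show ?thesis using Ce L(4) rp_trans by auto
    qed
  qed
  show ?case using C1 C2 C3 C4 C5 C6 by blast
qed

lemma colreduce:
  fixes A :: "'a::ring_1_no_zero_divisors mat"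
  assumes I: "invariant_ring TYPE('a)" and Bz: "bezout_ring TYPE('a)"
    and A: "A \<in> carrier_mat m n" and sh: "shape s A" and i: "i < m" and ss: "s \<le> s'" "s' < n"
  shows "\<exists>B. B \<in> carrier_mat m n \<and> beqv s A B \<and>
    (\<forall>r j. r < m \<longrightarrow> j < s' \<longrightarrow> B $$ (r,j) = A $$ (r,j)) \<and>
    (\<forall>r j. r < m \<longrightarrow> s' \<le> j \<longrightarrow> j < n \<longrightarrow> B $$ (r,j) \<in> ridl (rowset A r {s'..<n})) \<and>
    (\<forall>j. s' < j \<longrightarrow> j < n \<longrightarrow> B $$ (i,j) = 0) \<and>
    (\<forall>j. s' \<le> j \<longrightarrow> j < n \<longrightarrow> A $$ (i,j) \<in> rp (B $$ (i,s')))"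
proof -
  have e: "Suc s' + (n - Suc s') = n" using ss by simp
  show ?thesis using colreduce_aux[OF I Bz A sh i ss, of "n - Suc s'"] ss unfolding e by auto
qed

definition Inv :: "nat \<Rightarrow> nat \<Rightarrow> 'a::ring_1 mat \<Rightarrow> 'a mat \<Rightarrow> bool" where
  "Inv s i A B \<longleftrightarrow> B \<in> carrier_mat (dim_row A) (dim_col A) \<and> beqv s A B \<and>
     (\<forall>j. s < j \<longrightarrow> j < dim_col A \<longrightarrow> B $$ (s,j) = 0) \<and>
     (\<forall>k j. s \<le> k \<longrightarrow> k < i \<longrightarrow> s \<le> j \<longrightarrow> j < dim_col A \<longrightarrow> B $$ (k,j) \<in> rp (B $$ (s,s)))"

lemma ridl_zero_set: "X \<subseteq> {0} \<Longrightarrow> x \<in> ridl X \<Longrightarrow> (x::'a::ring_1) = 0"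
  using ridl_rp[of X 0 x] rp_zero rp_0 by blast

lemma claimG_step_small:
  fixes A :: "'a::ring_1_no_zero_divisors mat"
  assumes I: "invariant_ring TYPE('a)" and Bz: "bezout_ring TYPE('a)"
    and A: "A \<in> carrier_mat m n" and sh: "shape s A" and sm: "s < m" and n: "n = Suc s"
    and i: "s < i" "i < m" and inv: "Inv s i A B"
  shows "\<exists>C. Inv s (Suc i) A C"
proof -
  have dA: "dim_row A = m" "dim_col A = n" using A by auto
  have B: "B \<in> carrier_mat m n" "beqv s A B" "\<forall>k j. s \<le> k \<longrightarrow> k < i \<longrightarrow> s \<le> j \<longrightarrow> j < n \<longrightarrow> B $$ (k,j) \<in> rp (B $$ (s,s))"
    using inv unfolding Inv_def dA by auto
  have shB: "shape s B" using shape_of_beqv[OF B(2) sh] .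
  obtain a b c d e where L: "inv2 (a,b,c,d)" "a*B$$(s,s) + b*B$$(i,s) = e" "c*B$$(s,s) + d*B$$(i,s) = 0"
    "B$$(s,s) \<in> rp e" "B$$(i,s) \<in> rp e"
    using L_col[OF I Bz, of "B$$(s,s)" "B$$(i,s)"] by blast
  let ?C = "rowop B s i (a,b,c,d)"
  have kl: "s < m" "i < m" "s \<noteq> i" using i sm by auto
  have idx: "\<And>r j. r < m \<Longrightarrow> j < n \<Longrightarrow> ?C $$ (r,j) =
     (if r = s then a * B$$(s,j) + b * B$$(i,j) else if r = i then c * B$$(s,j) + d * B$$(i,j) else B$$(r,j))"
    using rowop_idx[OF B(1) kl] by blast
  have C1: "?C \<in> carrier_mat m n" using rowop_carrier[OF B(1)] .
  have C2: "beqv s A ?C" using beqv_trans[OF A B(2) rowop_beqv[OF I B(1) shB _ _ kl L(1)]] i by simp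
  have Cs: "?C $$ (s,s) = e" using idx[of s s] L(2) sm n by simp
  have C4: "\<forall>k j. s \<le> k \<longrightarrow> k < Suc i \<longrightarrow> s \<le> j \<longrightarrow> j < n \<longrightarrow> ?C $$ (k,j) \<in> rp (?C $$ (s,s))"
  proof (intro allI impI)
    fix k j assume kj: "s \<le> k" "k < Suc i" "s \<le> j" "j < n"
    then have j: "j = s" using n by simp
    have km: "k < m" using kj i by simp
    show "?C $$ (k,j) \<in> rp (?C $$ (s,s))"
    proof (cases "k = s")
      case True then show ?thesis using rp_self j by simp
    next
      case ks: False
      show ?thesis
      proof (cases "k = i")
        case True then show ?thesis using idx[OF km kj(4)] L(3) j ks rp_0 by simp
      next
        case False
        then have "k < i" using kj by simp
        then have "B $$ (k,j) \<in> rp (B $$ (s,s))" using B(3) kj by blast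
        then show ?thesis using idx[OF km kj(4)] False ks Cs L(4) rp_trans by simp
      qed
    qed
  qed
  have C3: "\<forall>j. s < j \<longrightarrow> j < n \<longrightarrow> ?C $$ (s,j) = 0" using n by simp
  show ?thesis unfolding Inv_def dA using C1 C2 C3 C4 by blast
qed

lemma claimG_step_big:
  fixes A :: "'a::ring_1_no_zero_divisors mat"
  assumes I: "invariant_ring TYPE('a)" and Bz: "bezout_ring TYPE('a)" and S: "simple_range_2 TYPE('a)"
    and A: "A \<in> carrier_mat m n" and sh: "shape s A" and sm: "s < m" and n: "Suc s < n"
    and i: "s < i" "i < m" and inv: "Inv s i A B"
  shows "\<exists>C. Inv s (Suc i) A C"
proof -
  have dA: "dim_row A = m" "dim_col A = n" using A by auto
  have B: "B \<in> carrier_mat m n" "beqv s A B" "\<forall>j. s < j \<longrightarrow> j < n \<longrightarrow> B $$ (s,j) = 0"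
    "\<forall>k j. s \<le> k \<longrightarrow> k < i \<longrightarrow> s \<le> j \<longrightarrow> j < n \<longrightarrow> B $$ (k,j) \<in> rp (B $$ (s,s))"
    using inv unfolding Inv_def dA by auto
  have shB: "shape s B" using shape_of_beqv[OF B(2) sh] .
  obtain C where C: "C \<in> carrier_mat m n" "beqv s B C"
    "\<forall>r j. r < m \<longrightarrow> j < Suc s \<longrightarrow> C $$ (r,j) = B $$ (r,j)"
    "\<forall>r j. r < m \<longrightarrow> Suc s \<le> j \<longrightarrow> j < n \<longrightarrow> C $$ (r,j) \<in> ridl (rowset B r {Suc s..<n})"
    "\<forall>j. Suc s < j \<longrightarrow> j < n \<longrightarrow> C $$ (i,j) = 0"
    using colreduce[OF I Bz B(1) shB i(2), of "Suc s"] n by auto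
  have shC: "shape s C" using shape_of_beqv[OF C(2) shB] .
  have Css: "C $$ (s,s) = B $$ (s,s)" using C(3) sm by simp
  have Cs0: "C $$ (s,j) = 0" if "Suc s \<le> j" "j < n" for j
  proof -
    have "rowset B s {Suc s..<n} \<subseteq> {0}" unfolding rowset_def using B(3) by auto
    then show ?thesis using C(4) that sm ridl_zero_set by blast
  qed
  have Ck: "C $$ (k,j) \<in> rp (C $$ (s,s))" if "s \<le> k" "k < i" "s \<le> j" "j < n" for k j
  proof (cases "j = s")
    case True then show ?thesis using C(3) B(4) that i Css by simp
  next
    case False
    have "rowset B k {Suc s..<n} \<subseteq> rp (B $$ (s,s))" unfolding rowset_def using B(4) that by auto
    moreover have "C $$ (k,j) \<in> ridl (rowset B k {Suc s..<n})" using C(4) that False i by auto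
    ultimately show ?thesis using Css ridl_rp by metis
  qed
  obtain P Q u where K: "inv2 P" "inv2 Q"
    "fst (m2mul (m2mul P (C$$(s,s), C$$(s,Suc s), C$$(i,s), C$$(i,Suc s))) Q) = u"
    "u \<in> ridl {C$$(s,s), C$$(s,Suc s), C$$(i,s), C$$(i,Suc s)}"
    "{C$$(s,s), C$$(s,Suc s), C$$(i,s), C$$(i,Suc s)} \<subseteq> rp u"
    using Key2[OF I Bz S] by blast
  obtain p0 p1 p2 p3 where Pd: "P = (p0,p1,p2,p3)" by (cases P) auto
  obtain q0 q1 q2 q3 where Qd: "Q = (q0,q1,q2,q3)" by (cases Q) auto
  let ?D1 = "rowop C s i P"
  let ?D = "colop ?D1 s (Suc s) Q"
  have kl: "s < m" "i < m" "s \<noteq> i" using i sm by auto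
  have kl2: "s < n" "Suc s < n" "s \<noteq> Suc s" using n by auto
  have D1c: "?D1 \<in> carrier_mat m n" using rowop_carrier[OF C(1)] .
  have idx1: "\<And>r j. r < m \<Longrightarrow> j < n \<Longrightarrow> ?D1 $$ (r,j) =
     (if r = s then p0 * C$$(s,j) + p1 * C$$(i,j) else if r = i then p2 * C$$(s,j) + p3 * C$$(i,j) else C$$(r,j))"
    unfolding Pd using rowop_idx[OF C(1) kl] by blast
  have idx: "\<And>r j. r < m \<Longrightarrow> j < n \<Longrightarrow> ?D $$ (r,j) =
     (if j = s then ?D1$$(r,s) * q0 + ?D1$$(r,Suc s) * q2 else if j = Suc s then ?D1$$(r,s) * q1 + ?D1$$(r,Suc s) * q3 else ?D1$$(r,j))"
    unfolding Qd using colop_idx[OF D1c kl2] by blast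
  have Dc: "?D \<in> carrier_mat m n" using colop_carrier[OF D1c] .
  have bD1: "beqv s C ?D1" using rowop_beqv[OF I C(1) shC _ _ kl K(1)] i by simp
  have shD1: "shape s ?D1" using shape_of_beqv[OF bD1 shC] .
  have bD: "beqv s ?D1 ?D" using colop_beqv[OF D1c shD1 _ _ kl2 K(2)] by simp
  have shD: "shape s ?D" using shape_of_beqv[OF bD shD1] .
  have Du: "?D $$ (s,s) = u"
    using idx[of s s] idx1[of s s] idx1[of s "Suc s"] kl kl2 K(3) unfolding Pd Qd by simp
  have Css_u: "C $$ (s,s) \<in> rp u" using K(5) by auto
  have D1u: "?D1 $$ (k,j) \<in> rp u" if "s \<le> k" "k \<le> i" "s \<le> j" "j < n" for k j
  proof -
    have km: "k < m" using that i by simp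
    have Csj: "C $$ (s,j) \<in> rp u" "C $$ (i,j) \<in> rp u"
    proof -
      have "C $$ (s,j) \<in> rp u \<and> C $$ (i,j) \<in> rp u"
      proof (cases "j \<le> Suc s")
        case True
        then have "j = s \<or> j = Suc s" using that by auto
        then show ?thesis using K(5) by auto
      next
        case False
        then show ?thesis using Cs0 C(5) that rp_0 by auto
      qed
      then show "C $$ (s,j) \<in> rp u" "C $$ (i,j) \<in> rp u" by auto
    qed
    show ?thesis
    proof (cases "k = s \<or> k = i")
      case True
      then show ?thesis using idx1[OF km that(4)] Csj rp_combL[OF I] by auto
    next
      case False
      then have "k < i" using that by simp
      then have "C $$ (k,j) \<in> rp (C $$ (s,s))" using Ck that by blast
      then show ?thesis using idx1[OF km that(4)] False Css_u rp_trans by auto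
    qed
  qed
  have Du_all: "?D $$ (k,j) \<in> rp u" if "s \<le> k" "k \<le> i" "s \<le> j" "j < n" for k j
  proof -
    have km: "k < m" using that i by simp
    have "?D1 $$ (k,s) \<in> rp u" "?D1 $$ (k,Suc s) \<in> rp u" using D1u that n by auto
    then show ?thesis using idx[OF km that(4)] D1u[OF that] rp_combR by auto
  qed
  have Ds0: "?D $$ (s,j) = 0" if "Suc s < j" "j < n" for j
    using idx[OF sm that(2)] idx1[OF sm that(2)] that Cs0[of j] C(5) by simp
  obtain E where E: "E \<in> carrier_mat m n" "beqv s ?D E"
    "\<forall>r j. r < m \<longrightarrow> s \<le> j \<longrightarrow> j < n \<longrightarrow> E $$ (r,j) \<in> ridl (rowset ?D r {s..<n})"
    "\<forall>j. s < j \<longrightarrow> j < n \<longrightarrow> E $$ (s,j) = 0"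
    "\<forall>j. s \<le> j \<longrightarrow> j < n \<longrightarrow> ?D $$ (s,j) \<in> rp (E $$ (s,s))"
    using colreduce[OF I Bz Dc shD sm, of s] n by auto
  have uE: "u \<in> rp (E $$ (s,s))" using E(5) Du n by auto
  have E4: "\<forall>k j. s \<le> k \<longrightarrow> k < Suc i \<longrightarrow> s \<le> j \<longrightarrow> j < n \<longrightarrow> E $$ (k,j) \<in> rp (E $$ (s,s))"
  proof (intro allI impI)
    fix k j assume kj: "s \<le> k" "k < Suc i" "s \<le> j" "j < n"
    have "rowset ?D k {s..<n} \<subseteq> rp u" unfolding rowset_def using Du_all kj by auto
    moreover have "E $$ (k,j) \<in> ridl (rowset ?D k {s..<n})" using E(3) kj i by auto
    ultimately have "E $$ (k,j) \<in> rp u" using ridl_rp by metis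
    then show "E $$ (k,j) \<in> rp (E $$ (s,s))" using uE rp_trans by blast
  qed
  have E2: "beqv s A E"
    using beqv_trans[OF A beqv_trans[OF A beqv_trans[OF A beqv_trans[OF A B(2) C(2)] bD1] bD] E(2)] .
  show ?thesis unfolding Inv_def dA using E(1) E2 E(4) E4 by blast
qed

lemma claimG:
  fixes A :: "'a::ring_1_no_zero_divisors mat"
  assumes I: "invariant_ring TYPE('a)" and Bz: "bezout_ring TYPE('a)" and S: "simple_range_2 TYPE('a)"
    and A: "A \<in> carrier_mat m n" and sh: "shape s A" and sm: "s < m" and sn: "s < n"
  shows "\<exists>B. B \<in> carrier_mat m n \<and> beqv s A B \<and> (\<forall>j. s < j \<longrightarrow> j < n \<longrightarrow> B $$ (s,j) = 0) \<and> blk s B \<subseteq> rp (B $$ (s,s))"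
proof -
  have dA: "dim_row A = m" "dim_col A = n" using A by auto
  obtain B0 where B0: "B0 \<in> carrier_mat m n" "beqv s A B0" "\<forall>j. s < j \<longrightarrow> j < n \<longrightarrow> B0 $$ (s,j) = 0"
    using colreduce[OF I Bz A sh sm, of s] sn by auto
  have "B0 $$ (s,j) \<in> rp (B0 $$ (s,s))" if "s \<le> j" "j < n" for j
  proof (cases "j = s")
    case True then show ?thesis using rp_self by simp
  next
    case False then show ?thesis using B0(3) that rp_0 by simp
  qed
  then have "Inv s (Suc s) A B0"
    unfolding Inv_def dA using B0 by (auto simp: le_less_Suc_eq)
  have step: "Suc s + k \<le> m \<Longrightarrow> \<exists>B. Inv s (Suc s + k) A B" for k
  proof (induction k)
    case 0 then show ?case using \<open>Inv s (Suc s) A B0\<close> by auto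
  next
    case (Suc k)
    then obtain B where B: "Inv s (Suc s + k) A B" by auto
    have i: "s < Suc s + k" "Suc s + k < m" using Suc.prems by auto
    show ?case
    proof (cases "n = Suc s")
      case True
      show ?thesis using claimG_step_small[OF I Bz A sh sm True i B] by simp
    next
      case False
      then have "Suc s < n" using sn by simp
      then show ?thesis using claimG_step_big[OF I Bz S A sh sm _ i B] by simp
    qed
  qed
  obtain B where B: "Inv s m A B" using step[of "m - Suc s"] sm by auto
  have "blk s B \<subseteq> rp (B $$ (s,s))"
  proof
    fix x assume "x \<in> blk s B"
    moreover have "dim_row B = m" "dim_col B = n" using B unfolding Inv_def dA by auto
    ultimately obtain k j where "x = B $$ (k,j)" "s \<le> k" "k < m" "s \<le> j" "j < n" unfolding blk_def by auto
    then show "x \<in> rp (B $$ (s,s))" using B unfolding Inv_def dA by auto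
  qed
  then show ?thesis using B unfolding Inv_def dA by auto
qed

lemma transv_inv2: "inv2 (1,0,-t,1::'a::ring_1)"
  unfolding inv2_def by (rule exI[of _ "(1,0,t,1)"]) simp

lemma clear:
  fixes B :: "'a::ring_1_no_zero_divisors mat"
  assumes I: "invariant_ring TYPE('a)"
    and B: "B \<in> carrier_mat m n" and sh: "shape s B" and sm: "s < m" and sn: "s < n"
    and r0: "\<forall>j. s < j \<longrightarrow> j < n \<longrightarrow> B $$ (s,j) = 0" and bl: "blk s B \<subseteq> rp (B $$ (s,s))"
  shows "\<exists>D. D \<in> carrier_mat m n \<and> beqv s B D \<and> shape (Suc s) D \<and> D $$ (s,s) = B $$ (s,s) \<and> blk (Suc s) D \<subseteq> rp (B $$ (s,s))"
proof -
  have dB: "dim_row B = m" "dim_col B = n" using B by auto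
  have step: "Suc s + k \<le> m \<Longrightarrow> \<exists>C. C \<in> carrier_mat m n \<and> beqv s B C \<and>
     (\<forall>r j. r < m \<longrightarrow> j < n \<longrightarrow> \<not> (j = s \<and> s < r \<and> r < Suc s + k) \<longrightarrow> C $$ (r,j) = B $$ (r,j)) \<and>
     (\<forall>r. s < r \<longrightarrow> r < Suc s + k \<longrightarrow> C $$ (r,s) = 0)" for k
  proof (induction k)
    case 0 then show ?case using B beqv_refl by (intro exI[of _ B]) auto
  next
    case (Suc k)
    let ?i = "Suc s + k"
    obtain C where C: "C \<in> carrier_mat m n" "beqv s B C"
      "\<forall>r j. r < m \<longrightarrow> j < n \<longrightarrow> \<not> (j = s \<and> s < r \<and> r < ?i) \<longrightarrow> C $$ (r,j) = B $$ (r,j)"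
      "\<forall>r. s < r \<longrightarrow> r < ?i \<longrightarrow> C $$ (r,s) = 0" using Suc by auto
    have im: "?i < m" using Suc.prems by simp
    have "B $$ (?i,s) \<in> rp (B $$ (s,s))" using bl blk_mem[of s ?i B s] dB im sn by auto
    then obtain r where "B $$ (?i,s) = B $$ (s,s) * r" unfolding rp_iff by blast
    moreover obtain t where "B $$ (s,s) * r = t * B $$ (s,s)" using duoL[OF I] by blast
    ultimately have t: "B $$ (?i,s) = t * B $$ (s,s)" by simp
    let ?C = "rowop C s ?i (1,0,-t,1)"
    have kl: "s < m" "?i < m" "s \<noteq> ?i" using im sm by auto
    have idx: "\<And>r j. r < m \<Longrightarrow> j < n \<Longrightarrow> ?C $$ (r,j) =
       (if r = s then 1 * C$$(s,j) + 0 * C$$(?i,j) else if r = ?i then (-t) * C$$(s,j) + 1 * C$$(?i,j) else C$$(r,j))"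
      using rowop_idx[OF C(1) kl] by blast
    have shC: "shape s C" using shape_of_beqv[OF C(2) sh] .
    have bC: "beqv s B ?C" using beqv_trans[OF B C(2) rowop_beqv[OF I C(1) shC _ _ kl transv_inv2]] by simp
    have Csj: "C $$ (s,j) = B $$ (s,j)" if "j < n" for j using C(3) that sm by auto
    have Cij: "C $$ (?i,j) = B $$ (?i,j)" if "j < n" for j using C(3) im that by auto
    have Bs0: "B $$ (s,j) = 0" if "j < n" "j \<noteq> s" for j
    proof (cases "j < s")
      case True then show ?thesis using sh that sm unfolding shape_def dB by auto
    next
      case False then show ?thesis using r0 that by auto
    qed
    have c3: "\<forall>r j. r < m \<longrightarrow> j < n \<longrightarrow> \<not> (j = s \<and> s < r \<and> r < Suc s + Suc k) \<longrightarrow> ?C $$ (r,j) = B $$ (r,j)"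
    proof (intro allI impI)
      fix r j assume rj: "r < m" "j < n" "\<not> (j = s \<and> s < r \<and> r < Suc s + Suc k)"
      show "?C $$ (r,j) = B $$ (r,j)"
      proof (cases "r = ?i")
        case True
        then have "j \<noteq> s" using rj by auto
        then show ?thesis using idx[OF rj(1,2)] True kl Csj[OF rj(2)] Bs0[OF rj(2)] Cij[OF rj(2)] by simp
      next
        case False
        then show ?thesis using idx[OF rj(1,2)] C(3) rj Csj by (auto simp: less_Suc_eq)
      qed
    qed
    have c4: "\<forall>r. s < r \<longrightarrow> r < Suc s + Suc k \<longrightarrow> ?C $$ (r,s) = 0"
    proof (intro allI impI)
      fix r assume r: "s < r" "r < Suc s + Suc k"
      show "?C $$ (r,s) = 0"
      proof (cases "r = ?i")
        case True
        then show ?thesis using idx[OF kl(2) sn] kl Csj[OF sn] Cij[OF sn] t by simp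
      next
        case False
        then show ?thesis using idx[of r s] C(4) r im sn by auto
      qed
    qed
    show ?case using rowop_carrier[OF C(1)] bC c3 c4 by blast
  qed
  obtain D where D: "D \<in> carrier_mat m n" "beqv s B D"
     "\<forall>r j. r < m \<longrightarrow> j < n \<longrightarrow> \<not> (j = s \<and> s < r) \<longrightarrow> D $$ (r,j) = B $$ (r,j)"
     "\<forall>r. s < r \<longrightarrow> r < m \<longrightarrow> D $$ (r,s) = 0"
    using step[of "m - Suc s"] sm by auto
  have dD: "dim_row D = m" "dim_col D = n" using D by auto
  have "shape (Suc s) D" unfolding shape_def dD
  proof (intro allI impI)
    fix i j assume ij: "i < m" "j < n" "i < Suc s \<or> j < Suc s" "i \<noteq> j"
    show "D $$ (i,j) = 0"
    proof (cases "j = s \<and> s < i")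
      case True then show ?thesis using D(4) ij by auto
    next
      case False
      then have "D $$ (i,j) = B $$ (i,j)" using D(3) ij by auto
      moreover have "B $$ (i,j) = 0"
      proof (cases "i < s \<or> j < s")
        case True then show ?thesis using sh ij unfolding shape_def dB by auto
      next
        case F2: False
        then have "i = s" using ij False by auto
        then show ?thesis using r0 ij F2 by auto
      qed
      ultimately show ?thesis by simp
    qed
  qed
  moreover have "D $$ (s,s) = B $$ (s,s)" using D(3) sm sn by auto
  moreover have "blk (Suc s) D \<subseteq> rp (B $$ (s,s))"
  proof
    fix x assume "x \<in> blk (Suc s) D"
    then obtain i j where ij: "x = D $$ (i,j)" "Suc s \<le> i" "i < m" "Suc s \<le> j" "j < n" unfolding blk_def dD by auto
    then have "x = B $$ (i,j)" using D(3) by auto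
    moreover have "B $$ (i,j) \<in> blk s B" using ij by (intro blk_mem) (auto simp: dB)
    ultimately show "x \<in> rp (B $$ (s,s))" using bl by auto
  qed
  ultimately show ?thesis using D by blast
qed

lemma beqv_eqv: "beqv s A B \<Longrightarrow> eqv A B" unfolding beqv_def by blast

lemma main_ind:
  fixes A :: "'a::ring_1_no_zero_divisors mat"
  assumes I: "invariant_ring TYPE('a)" and Bz: "bezout_ring TYPE('a)" and S: "simple_range_2 TYPE('a)"
    and A: "A \<in> carrier_mat m n"
  shows "s \<le> min m n \<Longrightarrow> \<exists>B. B \<in> carrier_mat m n \<and> eqv A B \<and> shape s B \<and>
     (\<forall>i. Suc i < s \<longrightarrow> B $$ (Suc i, Suc i) \<in> rp (B $$ (i,i))) \<and>
     (0 < s \<longrightarrow> blk s B \<subseteq> rp (B $$ (s - 1, s - 1)))"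
proof (induction s)
  case 0
  show ?case using A eqv_refl unfolding shape_def by (intro exI[of _ A]) auto
next
  case (Suc s)
  then obtain B where B: "B \<in> carrier_mat m n" "eqv A B" "shape s B"
     "\<forall>i. Suc i < s \<longrightarrow> B $$ (Suc i, Suc i) \<in> rp (B $$ (i,i))"
     "0 < s \<longrightarrow> blk s B \<subseteq> rp (B $$ (s - 1, s - 1))" by auto
  have sm: "s < m" "s < n" using Suc.prems by auto
  obtain C where C: "C \<in> carrier_mat m n" "beqv s B C" "\<forall>j. s < j \<longrightarrow> j < n \<longrightarrow> C $$ (s,j) = 0"
    "blk s C \<subseteq> rp (C $$ (s,s))" using claimG[OF I Bz S B(1) B(3) sm] by blast
  have shC: "shape s C" using shape_of_beqv[OF C(2) B(3)] .
  obtain D where D: "D \<in> carrier_mat m n" "beqv s C D" "shape (Suc s) D" "D $$ (s,s) = C $$ (s,s)"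
    "blk (Suc s) D \<subseteq> rp (C $$ (s,s))" using clear[OF I C(1) shC sm C(3) C(4)] by blast
  have dB: "dim_row B = m" "dim_col B = n" using B(1) by auto
  have dC: "dim_row C = m" "dim_col C = n" using C(1) by auto
  have outC: "C $$ (i,j) = B $$ (i,j)" if "i < m" "j < n" "i < s \<or> j < s" for i j
    using C(2) that unfolding beqv_def dB by auto
  have outD: "D $$ (i,j) = C $$ (i,j)" if "i < m" "j < n" "i < s \<or> j < s" for i j
    using D(2) that unfolding beqv_def dC by auto
  have eqvD: "eqv A D" using eqv_trans[OF A eqv_trans[OF A B(2) beqv_eqv[OF C(2)]] beqv_eqv[OF D(2)]] .
  have chain: "\<forall>i. Suc i < Suc s \<longrightarrow> D $$ (Suc i, Suc i) \<in> rp (D $$ (i,i))"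
  proof (intro allI impI)
    fix i assume i: "Suc i < Suc s"
    have Dii: "D $$ (i,i) = B $$ (i,i)" using outD[of i i] outC[of i i] i sm by simp
    show "D $$ (Suc i, Suc i) \<in> rp (D $$ (i,i))"
    proof (cases "Suc i < s")
      case True
      then have "D $$ (Suc i, Suc i) = B $$ (Suc i, Suc i)" using outD outC sm by simp
      then show ?thesis using B(4) True Dii by simp
    next
      case False
      then have si: "s = Suc i" using i by simp
      have "C $$ (s,s) \<in> blk s C" using sm by (intro blk_mem) (auto simp: dC)
      then have "C $$ (s,s) \<in> ridl (blk s B)" using C(2) ridl_mem unfolding beqv_def by blast
      moreover have "blk s B \<subseteq> rp (B $$ (i,i))" using B(5) si by simp
      ultimately have "C $$ (s,s) \<in> rp (B $$ (i,i))" using ridl_rp by blast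
      then show ?thesis using D(4) Dii si by simp
    qed
  qed
  have "0 < Suc s \<longrightarrow> blk (Suc s) D \<subseteq> rp (D $$ (Suc s - 1, Suc s - 1))" using D(5) D(4) by simp
  then show ?case using D(1,3) eqvD chain by blast
qed

lemma zero_chain:
  fixes e :: "nat \<Rightarrow> 'a::ring_1"
  assumes ch: "\<forall>i. Suc i < N \<longrightarrow> e (Suc i) \<in> rp (e i)" and r: "e r = 0"
  shows "r + k < N \<Longrightarrow> e (r + k) = 0"
proof (induction k)
  case 0 then show ?case using r by simp
next
  case (Suc k)
  then have "e (r + k) = 0" by simp
  moreover have "e (Suc (r + k)) \<in> rp (e (r + k))" using ch Suc.prems by simp
  ultimately show ?case using rp_zero by simp
qed

theorem theorem3p7:
  assumes "invariant_ring TYPE('a::ring_1_no_zero_divisors)"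
    and "bezout_ring TYPE('a)"
    and "simple_range_2 TYPE('a)"
  shows "DK_elementary_divisor_ring TYPE('a)"
  unfolding DK_elementary_divisor_ring_def
proof (intro allI impI)
  note I = assms(1) and Bz = assms(2) and S = assms(3)
  fix m n and A :: "'a mat" assume A: "A \<in> carrier_mat m n"
  let ?N = "min m n"
  obtain B where B: "B \<in> carrier_mat m n" "eqv A B" "shape ?N B"
     "\<forall>i. Suc i < ?N \<longrightarrow> B $$ (Suc i, Suc i) \<in> rp (B $$ (i,i))"
    using main_ind[OF I Bz S A, of ?N] by blast
  define e where "e i = B $$ (i,i)" for i
  define r where "r = (if \<exists>i. i < ?N \<and> e i = 0 then (LEAST i. i < ?N \<and> e i = 0) else ?N)"
  have ch: "\<forall>i. Suc i < ?N \<longrightarrow> e (Suc i) \<in> rp (e i)" using B(4) unfolding e_def by simp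
  have Lr: "r < ?N \<and> e r = 0" if ex: "\<exists>i. i < ?N \<and> e i = 0"
  proof -
    have "r = (LEAST i. i < ?N \<and> e i = 0)" unfolding r_def using ex by simp
    then show ?thesis using LeastI_ex[OF ex] by simp
  qed
  have rN: "r \<le> ?N"
  proof (cases "\<exists>i. i < ?N \<and> e i = 0")
    case True
    then have "r < ?N" using Lr by blast
    then show ?thesis by simp
  next
    case False
    have "r = ?N" unfolding r_def by (rule if_not_P[OF False])
    then show ?thesis by simp
  qed
  have nz: "e i \<noteq> 0" if "i < r" for i
  proof
    assume e0: "e i = 0"
    have iN: "i < ?N" using that rN by simp
    then have ex: "\<exists>i. i < ?N \<and> e i = 0" using e0 by blast
    have "r = (LEAST i. i < ?N \<and> e i = 0)" unfolding r_def using ex by simp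
    then have "r \<le> i" using iN e0 by (simp add: Least_le)
    then show False using that by simp
  qed
  have z: "e i = 0" if "r \<le> i" "i < ?N" for i
  proof -
    have ex: "\<exists>i. i < ?N \<and> e i = 0"
    proof (rule ccontr)
      assume nex: "\<not> ?thesis" have "r = ?N" unfolding r_def by (rule if_not_P[OF nex])
      then show False using that by simp
    qed
    then have "e r = 0" using Lr by blast
    then show ?thesis using zero_chain[OF ch, of r "i - r"] that by simp
  qed
  have dB: "dim_row B = m" "dim_col B = n" using B(1) by auto
  have Bdiag: "B = mat m n (\<lambda>(i, j). if i = j \<and> i < r then e i else 0)"
  proof (rule eq_matI)
    fix i j assume ij: "i < dim_row (mat m n (\<lambda>(i, j). if i = j \<and> i < r then e i else 0))"
                       "j < dim_col (mat m n (\<lambda>(i, j). if i = j \<and> i < r then e i else 0))"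
    then have ij': "i < m" "j < n" by auto
    show "B $$ (i,j) = mat m n (\<lambda>(i, j). if i = j \<and> i < r then e i else 0) $$ (i,j)"
    proof (cases "i = j")
      case True
      then have "i < ?N" using ij' by simp
      then show ?thesis using True ij' z[of i] unfolding e_def by (cases "i < r") auto
    next
      case False
      have "i < ?N \<or> j < ?N" using ij' by (simp add: min_def)
      then have "B $$ (i,j) = 0" using B(3) False ij' unfolding shape_def dB by blast
      then show ?thesis using False ij' by simp
    qed
  qed (use dB in auto)
  obtain P P' Q Q' where PQ: "P \<in> carrier_mat m m" "P' \<in> carrier_mat m m" "P * P' = 1\<^sub>m m" "P' * P = 1\<^sub>m m"
     "Q \<in> carrier_mat n n" "Q' \<in> carrier_mat n n" "Q * Q' = 1\<^sub>m n" "Q' * Q = 1\<^sub>m n" "B = P * A * Q"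
    using B(2) A unfolding eqv_def by (elim exE conjE) (rule that; simp)
  have invP: "invertible_mat P" unfolding invertible_mat_def inverts_mat_def square_mat.simps
    using PQ(3,4) carrier_matD[OF PQ(1)] carrier_matD[OF PQ(2)] by auto
  have invQ: "invertible_mat Q" unfolding invertible_mat_def inverts_mat_def square_mat.simps
    using PQ(7,8) carrier_matD[OF PQ(5)] carrier_matD[OF PQ(6)] by auto
  have cond: "\<forall>i. i + 1 < r \<longrightarrow> two_sided_ideal (e (i + 1)) \<subseteq> right_principal (e i) \<inter> left_principal (e i) \<and> invariant_elem (e i)"
  proof (intro allI impI)
    fix i assume i: "i + 1 < r"
    have ne: "e i \<noteq> 0" using nz i by simp
    have ie: "invariant_elem (e i)" using I ne unfolding invariant_ring_def by blast
    then have lr: "left_principal (e i) = rp (e i)" unfolding invariant_elem_def by simp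
    have "e (i+1) \<in> rp (e i)" using ch i rN by simp
    then have "two_sided_ideal (e (i + 1)) \<subseteq> rp (e i)" using two_sided_sub[OF I] rp_trans by blast
    then show "two_sided_ideal (e (i + 1)) \<subseteq> right_principal (e i) \<inter> left_principal (e i) \<and> invariant_elem (e i)"
      using lr ie by simp
  qed
  show "\<exists>P Q eps r. P \<in> carrier_mat m m \<and> invertible_mat P \<and> Q \<in> carrier_mat n n \<and> invertible_mat Q \<and>
         r \<le> min m n \<and> P * A * Q = mat m n (\<lambda>(i, j). if i = j \<and> i < r then eps i else 0) \<and>
         (\<forall>i<r. eps i \<noteq> 0) \<and>
         (\<forall>i. i + 1 < r \<longrightarrow> two_sided_ideal (eps (i + 1)) \<subseteq> right_principal (eps i) \<inter> left_principal (eps i)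
              \<and> invariant_elem (eps i))"
    apply (rule exI[of _ P], rule exI[of _ Q], rule exI[of _ e], rule exI[of _ r])
    apply (intro conjI)
    using PQ(1) apply assumption
    using invP apply assumption
    using PQ(5) apply assumption
    using invQ apply assumption
    using rN apply assumption
    using PQ(9) Bdiag apply simp
    using nz apply blast
    using cond by blast
qed

end
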